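(* (1) Let $\theta\in\mathbb{F}_{q^3}^*$ with $N(\theta)\neq1$. Then $\mu_{\mathrm{line}}(\Pi_\theta)=\mathcal S_{-1/\theta}$ and $\mu_{\mathrm{pt}}(\Pi_\theta)=T\mathcal S_{1/\theta}$. (2) Let $\theta\in\mathbb{F}_{q^3}^*$ with $N(\theta)\neq1$. Then $\mu_{\mathrm{line}}(\Pi_\theta^\phi)$ is a $T^\phi$-sls, and $\mu_{\mathrm{pt}}(\Pi_\theta^\phi)$ is a pencil of lines $\{T^\phi X: X\in\mathcal S\}$ for some $T^\phi$-sls $\mathcal S$. (3) Let $\theta\in\mathbb{F}_{q^3}^*$ with $N(\theta)\neq1$. Then $\mu_{\mathrm{line}}(\Pi_\theta^{\phi^2})$ is a $T^{\phi^2}$-sls, and $\mu_{\mathrm{pt}}(\Pi_\theta^{\phi^2})$ is a pencil of lines $\{T^{\phi^2}X:X\in\mathcal S\}$ for some $T^{\phi^2}$-sls $\mathcal S$. (4) Let $\mathcal B$ be an $\mathbb{F}_q$-plane in $\mathrm{orb}(\mathsf S_T)$ all of whose lines have Type III, which is not a $T$-plane, a $T^\phi$-plane or a $T^{\phi^2}$-plane. Then $\mu_{\mathrm{line}}(\mathcal B)$ is the pointset of an $\mathbb{F}_q$-plane in $\mathrm{orb}(\mathsf S_T)$. (5) Let $\mathcal B$ be an $\mathbb{F}_q$-plane in $\mathrm{orb}(\mathsf S_T)$ all of whose points have Type III, which is not a $T$-plane, a $T^\phi$-plane or a $T^{\phi^2}$-plane. Then $\mu_{\mathrm{pt}}(\mathcal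 B)$ is the lineset of an $\mathbb{F}_q$-plane in $\mathrm{orb}(\mathsf S_T)$.
   Context: Let $q$ be a prime power, $\mathbb{F}_{q^3}^*=\mathbb{F}_{q^3}\setminus\{0\}$, $N(x)=x^{q^2+q+1}$. Points of $\mathrm{PG}(2,q^3)$ have homogeneous coordinates $(x,y,z)$ and lines $[a,b,c]$. An $\mathbb{F}_q$-plane is a subplane of order $q$; its lines are those meeting it in $q+1$ points. Let $\phi$ be the collineation $(x,y,z)\mapsto(z^q,x^q,y^q)$ (on lines $[d,e,f]\mapsto[f^q,d^q,e^q]$), with fixed points $\mathcal P_{2,q}=\{(x,x^q,x^{q^2}):x\in\mathbb{F}_{q^3}^*\}$. A point has Type I, II, III according as its $\phi$-orbit is one point, three collinear points, three non-collinear points; a line has Type I, II, III according as its $\phi$-orbit is one line, three concurrent lines, three non-concurrent lines. Let $\mu_{\mathrm{pt}}$ map a Type III point $P$ to the line $P^\phi P^{\phi^2}$ and $\mu_{\mathrm{line}}$ map a Type III line $\ell$ to the point $\ell^\phi\cap\ell^{\phi^2}$. For an $\mathbb{F}_q$-plane $\mathcal B$ with only Type III points, $\mu_{\mathrm{pt}}(\mathcal B)=\{\mu_{\mathrm{pt}}(P):P\in\mathcal B\}$; for one with only Type III lines, $\mu_{\mathrm{line}}(\mathcal B)=\{\mu_{\mathrm{line}}(\ell):\ell\text{ a line of }\mathcal B\}$. Let $T=(0,0,1)$, $T^\phi=(1,0,0)$, $T^{\phi^2}=(0,1,0)$. Let $\psi_t:(x,y,z)\mapsto(tx,t^qy,t^{q^2}z)$,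 $\mathsf S_T=\{\psi_t:t\in\mathbb{F}_{q^3}^*\}$, and $\mathrm{orb}(\mathsf S_T)$ the set of its point orbits. The orbits of size $q^2+q+1$ contained in the line $T^\phi T^{\phi^2}$ (resp. $T^{\phi^2}T$, $TT^\phi$) are called $T$-slses (resp. $T^\phi$-slses, $T^{\phi^2}$-slses). For $\theta\in\mathbb{F}_{q^3}^*$, $\mathcal S_\theta=\{(x\theta,x^q,0):x\in\mathbb{F}_{q^3}^*\}$ (these are the $T$-slses), and $T\mathcal S_\theta=\{TX:X\in\mathcal S_\theta\}$. For $\theta\in\mathbb{F}_{q^3}^*$, the $T$-plane $\Pi_\theta=\{(r\theta^{q+1},r^q,r^{q^2}\theta):r\in\mathbb{F}_{q^3}^*\}$ is an $\mathbb{F}_q$-plane in $\mathrm{orb}(\mathsf S_T)$; the sets $\Pi_\theta^\phi$ are called $T^\phi$-planes and the sets $\Pi_\theta^{\phi^2}$ are called $T^{\phi^2}$-planes. *)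

theory Defs
  imports Main "HOL-Computational_Algebra.Primes" "HOL-Library.Cardinality"
begin

(* Homogeneous coordinates of PG(2,F): nonzero triples. A point (and likewise a line)
   is represented by its class of nonzero scalar multiples. *)
type_synonym 'a tri = "'a \<times> 'a \<times> 'a"

definition cls :: "'a::field tri \<Rightarrow> 'a tri set" where
  "cls v = {(c * fst v, c * fst (snd v), c * snd (snd v)) | c. c \<noteq> 0}"

definition PG_points :: "'a::field tri set set" where
  "PG_points = {cls v | v. v \<noteq> (0,0,0)}"

definition PG_lines :: "'a::field tri set set" where
  "PG_lines = {cls v | v. v \<noteq> (0,0,0)}"

definition dot3 :: "'a::field tri \<Rightarrow> 'a tri \<Rightarrow> 'a" where
  "dot3 v w = fst v * fst w + fst (snd v) * fst (snd w) + snd (snd v) * snd (snd w)"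

definition incid :: "'a::field tri set \<Rightarrow> 'a tri set \<Rightarrow> bool" where
  "incid P l \<longleftrightarrow> P \<in> PG_points \<and> l \<in> PG_lines \<and> (\<exists>v\<in>P. \<exists>w\<in>l. dot3 v w = 0)"

definition frob_vec :: "nat \<Rightarrow> 'a::field tri \<Rightarrow> 'a tri" where
  "frob_vec q v = (snd (snd v) ^ q, fst v ^ q, fst (snd v) ^ q)"

definition phi :: "nat \<Rightarrow> 'a::field tri set \<Rightarrow> 'a tri set" where
  "phi q X = frob_vec q ` X"

definition collinear3 :: "'a::field tri set \<Rightarrow> 'a tri set \<Rightarrow> 'a tri set \<Rightarrow> bool" where
  "collinear3 P Q R \<longleftrightarrow> (\<exists>l\<in>PG_lines. incid P l \<and> incid Q l \<and> incid R l)"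

definition concurrent3 :: "'a::field tri set \<Rightarrow> 'a tri set \<Rightarrow> 'a tri set \<Rightarrow> bool" where
  "concurrent3 l m n \<longleftrightarrow> (\<exists>P\<in>PG_points. incid P l \<and> incid P m \<and> incid P n)"

definition typeIII_pt :: "nat \<Rightarrow> 'a::field tri set \<Rightarrow> bool" where
  "typeIII_pt q P \<longleftrightarrow> P \<in> PG_points \<and> \<not> collinear3 P (phi q P) (phi q (phi q P))"

definition typeIII_line :: "nat \<Rightarrow> 'a::field tri set \<Rightarrow> bool" where
  "typeIII_line q l \<longleftrightarrow> l \<in> PG_lines \<and> \<not> concurrent3 l (phi q l) (phi q (phi q l))"

definition join :: "'a::field tri set \<Rightarrow> 'a tri set \<Rightarrow> 'a tri set" where
  "join P Q = (THE l. l \<in> PG_lines \<and> incid P l \<and> incid Q l)"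

definition meet :: "'a::field tri set \<Rightarrow> 'a tri set \<Rightarrow> 'a tri set" where
  "meet l m = (THE P. P \<in> PG_points \<and> incid P l \<and> incid P m)"

definition mu_pt :: "nat \<Rightarrow> 'a::field tri set \<Rightarrow> 'a tri set" where
  "mu_pt q P = join (phi q P) (phi q (phi q P))"

definition mu_line :: "nat \<Rightarrow> 'a::field tri set \<Rightarrow> 'a tri set" where
  "mu_line q l = meet (phi q l) (phi q (phi q l))"

definition lines_of :: "nat \<Rightarrow> 'a::field tri set set \<Rightarrow> 'a tri set set" where
  "lines_of q B = {l \<in> PG_lines. card {P \<in> B. incid P l} = q + 1}"

(* B is (the point set of) a subplane of order q: with the lines meeting B in at least
   two points it is a projective plane whose lines carry q+1 points *)
definition is_Fq_plane :: "nat \<Rightarrow> 'a::field tri set set \<Rightarrow> bool" where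
  "is_Fq_plane q B \<longleftrightarrow>
     B \<subseteq> PG_points \<and>
     (\<forall>l\<in>PG_lines. card {P \<in> B. incid P l} \<ge> 2 \<longrightarrow> card {P \<in> B. incid P l} = q + 1) \<and>
     (\<forall>l\<in>lines_of q B. \<forall>m\<in>lines_of q B. l \<noteq> m \<longrightarrow> (\<exists>P\<in>B. incid P l \<and> incid P m)) \<and>
     (\<exists>P1\<in>B. \<exists>P2\<in>B. \<exists>P3\<in>B. \<exists>P4\<in>B.
        \<not> collinear3 P1 P2 P3 \<and> \<not> collinear3 P1 P2 P4 \<and>
        \<not> collinear3 P1 P3 P4 \<and> \<not> collinear3 P2 P3 P4)"

definition mu_line_set :: "nat \<Rightarrow> 'a::field tri set set \<Rightarrow> 'a tri set set" where
  "mu_line_set q B = mu_line q ` lines_of q B"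

definition mu_pt_set :: "nat \<Rightarrow> 'a::field tri set set \<Rightarrow> 'a tri set set" where
  "mu_pt_set q B = mu_pt q ` B"

definition Norm :: "nat \<Rightarrow> 'a::field \<Rightarrow> 'a" where
  "Norm q x = x ^ (q^2 + q + 1)"

definition psi_vec :: "nat \<Rightarrow> 'a::field \<Rightarrow> 'a tri \<Rightarrow> 'a tri" where
  "psi_vec q t v = (t * fst v, t ^ q * fst (snd v), t ^ (q^2) * snd (snd v))"

definition orbit_ST :: "nat \<Rightarrow> 'a::field tri set \<Rightarrow> 'a tri set set" where
  "orbit_ST q P = {psi_vec q t ` P | t. t \<noteq> 0}"

definition orb_ST :: "nat \<Rightarrow> 'a::field tri set set set" where
  "orb_ST q = {orbit_ST q P | P. P \<in> PG_points}"

definition ptT :: "'a::field tri set" where "ptT = cls (0,0,1)"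
definition ptTphi :: "'a::field tri set" where "ptTphi = cls (1,0,0)"
definition ptTphi2 :: "'a::field tri set" where "ptTphi2 = cls (0,1,0)"

definition sls_on :: "nat \<Rightarrow> 'a::field tri set \<Rightarrow> 'a tri set set \<Rightarrow> bool" where
  "sls_on q l S \<longleftrightarrow> S \<in> orb_ST q \<and> card S = q^2 + q + 1 \<and> (\<forall>P\<in>S. incid P l)"

definition T_sls :: "nat \<Rightarrow> 'a::field tri set set \<Rightarrow> bool" where
  "T_sls q S \<longleftrightarrow> sls_on q (join ptTphi ptTphi2) S"
definition Tphi_sls :: "nat \<Rightarrow> 'a::field tri set set \<Rightarrow> bool" where
  "Tphi_sls q S \<longleftrightarrow> sls_on q (join ptTphi2 ptT) S"
definition Tphi2_sls :: "nat \<Rightarrow> 'a::field tri set set \<Rightarrow> bool" where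
  "Tphi2_sls q S \<longleftrightarrow> sls_on q (join ptT ptTphi) S"

definition S_theta :: "nat \<Rightarrow> 'a::field \<Rightarrow> 'a tri set set" where
  "S_theta q \<theta> = {cls (x * \<theta>, x ^ q, 0) | x. x \<noteq> 0}"

definition pencil :: "'a::field tri set \<Rightarrow> 'a tri set set \<Rightarrow> 'a tri set set" where
  "pencil X S = {join X Y | Y. Y \<in> S}"

definition Pi_theta :: "nat \<Rightarrow> 'a::field \<Rightarrow> 'a tri set set" where
  "Pi_theta q \<theta> = {cls (r * \<theta> ^ (q + 1), r ^ q, r ^ (q^2) * \<theta>) | r. r \<noteq> 0}"

definition T_plane :: "nat \<Rightarrow> 'a::field tri set set \<Rightarrow> bool" where
  "T_plane q B \<longleftrightarrow> (\<exists>\<theta>. \<theta> \<noteq> 0 \<and> B = Pi_theta q \<theta>)"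
definition Tphi_plane :: "nat \<Rightarrow> 'a::field tri set set \<Rightarrow> bool" where
  "Tphi_plane q B \<longleftrightarrow> (\<exists>\<theta>. \<theta> \<noteq> 0 \<and> B = phi q ` Pi_theta q \<theta>)"
definition Tphi2_plane :: "nat \<Rightarrow> 'a::field tri set set \<Rightarrow> bool" where
  "Tphi2_plane q B \<longleftrightarrow> (\<exists>\<theta>. \<theta> \<noteq> 0 \<and> B = phi q ` phi q ` Pi_theta q \<theta>)"

definition prime_power :: "nat \<Rightarrow> bool" where
  "prime_power q \<longleftrightarrow> (\<exists>p k. prime p \<and> k \<ge> 1 \<and> q = p ^ k)"

end

theory Submission
  imports Defs "HOL-Number_Theory.Residues" "HOL-Computational_Algebra.Polynomial"
begin

lemma power_card_same:
  fixes x :: "'a :: {finite,field}"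
  shows "x ^ card (UNIV :: 'a set) = x"
proof (cases "x = 0")
  case False
  have "x * (\<Prod>y\<in>UNIV-{0}. x * y) = x * x ^ (card (UNIV :: 'a set) - 1) * \<Prod>(UNIV-{0})"
    by (simp add: prod.distrib mult_ac)
  also have "x * x ^ (card (UNIV :: 'a set) - 1) = x ^ Suc (card (UNIV :: 'a set) - 1)"
    by (subst power_Suc) auto
  also have "Suc (card (UNIV :: 'a set) - 1) = card (UNIV :: 'a set)"
    using finite_UNIV_card_ge_0[where ?'a = 'a] by simp
  also have "(\<Prod>y\<in>UNIV-{0}. x * y) = (\<Prod>y\<in>UNIV-{0}. y)"
    by (rule prod.reindex_bij_witness[of _ "\<lambda>y. y / x" "\<lambda>y. x * y"]) (use False in auto)
  finally show ?thesis
    by simp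
qed (use finite_UNIV_card_ge_0[where ?'a = 'a] in auto)

lemma char_freshman:
  assumes "prime_power q" and "CARD('a::{finite,field}) = q ^ 3"
  shows "\<And>x y::'a. (x + y) ^ q = x ^ q + y ^ q"
proof -
  obtain p k where pk: "prime p" "k \<ge> 1" "q = p ^ k" using assms(1) unfolding prime_power_def by blast
  have fin: "finite (UNIV :: 'a set)" by simp
  have cpos: "CHAR('a) > 0" using finite_imp_CHAR_pos[OF fin] .
  have cpr: "prime CHAR('a)" using prime_CHAR_semidom[OF cpos] .
  have "CHAR('a) dvd p ^ (k * 3)" using CHAR_dvd_CARD[where 'a='a] assms(2) pk
    by (simp add: power_mult)
  hence "CHAR('a) dvd p" using cpr prime_dvd_power by blast
  hence cp: "CHAR('a) = p" using pk(1) cpr by (simp add: primes_dvd_imp_eq)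
  fix x y :: 'a
  show "(x + y) ^ q = x ^ q + y ^ q"
    by (rule freshmans_dream') (use cpr cp pk in auto)
qed

lemma card_fibres:
  assumes "finite A" and "\<And>b. b \<in> g ` A \<Longrightarrow> card {x\<in>A. g x = b} = k"
  shows "card A = card (g ` A) * k"
proof -
  have "A = (\<Union>b\<in>g ` A. {x\<in>A. g x = b})" by auto
  hence "card A = card (\<Union>b\<in>g ` A. {x\<in>A. g x = b})" by simp
  also have "\<dots> = (\<Sum>b\<in>g ` A. card {x\<in>A. g x = b})"
    by (rule card_UN_disjoint) (use assms(1) in auto)
  also have "\<dots> = (\<Sum>b\<in>g ` A. k)" using assms(2) by simp
  finally show ?thesis by simp
qed

lemma card_additive:
  fixes h :: "'a::{finite,ab_group_add} \<Rightarrow> 'b::ab_group_add"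
  assumes add: "\<And>x y. h (x + y) = h x + h y"
  shows "card (UNIV :: 'a set) = card (range h) * card {x. h x = 0}"
proof (rule card_fibres)
  show "finite (UNIV :: 'a set)" by simp
  have h0: "h 0 = 0" using add[of 0 0] by simp
  have hm: "h (x - y) = h x - h y" for x y using add[of "x - y" y] by (simp add: algebra_simps)
  fix b assume "b \<in> range h"
  then obtain y where y: "b = h y" by auto
  have 1: "x \<in> (\<lambda>k. y + k) ` {x. h x = 0}" if "h x = b" for x
  proof -
    have "h (x - y) = 0" using that y hm[of x y] by simp
    moreover have "x = y + (x - y)" by simp
    ultimately show ?thesis by blast
  qed
  have 2: "h (y + k) = b" if "h k = 0" for k using that y add by simp
  have "{x \<in> UNIV. h x = b} = (\<lambda>k. y + k) ` {x. h x = 0}"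
    using 1 2 by auto
  also have "card \<dots> = card {x. h x = 0}" by (rule card_image) (auto simp: inj_on_def)
  finally show "card {x \<in> UNIV. h x = b} = card {x. h x = 0}" .
qed

lemma card_roots_monoms:
  fixes S :: "'a::field set"
  assumes "p \<noteq> 0" "degree p \<le> d" "S = {x. poly p x = 0}"
  shows "card S \<le> d"
  using card_poly_roots_bound[OF assms(1)] assms by simp

definition Fr :: "nat \<Rightarrow> 'a::field \<Rightarrow> 'a" where "Fr q x = x ^ q"

locale frob0 =
  fixes q :: nat and F :: "'a::{finite,field} \<Rightarrow> 'a"
  assumes F_def: "F x = x ^ q"
    and F_add: "F (x + y) = F x + F y"
    and F3: "F (F (F x)) = x"
    and q2: "q \<ge> 2"
    and cardU: "CARD('a) = q ^ 3"
begin

lemma F0[simp]: "F 0 = 0" using q2 by (simp add: F_def)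
lemma F1[simp]: "F 1 = 1" by (simp add: F_def)
lemma F_mult: "F (x * y) = F x * F y" by (simp add: F_def power_mult_distrib)
lemma F_minus: "F (- x) = - F x" using F_add[of x "- x"] by (simp add: eq_neg_iff_add_eq_0 add.commute)
lemma F_diff: "F (x - y) = F x - F y" using F_add[of "x - y" y] by simp
lemma F_eq0[simp]: "F x = 0 \<longleftrightarrow> x = 0"
proof
  assume "F x = 0" hence "F (F (F x)) = 0" by simp
  thus "x = 0" by (simp only: F3)
qed simp
lemma F_inj: "F x = F y \<longleftrightarrow> x = y"
proof
  assume "F x = F y" hence "F (F (F x)) = F (F (F y))" by simp
  thus "x = y" by (simp only: F3)
qed simp
lemma F_inverse: "F (inverse x) = inverse (F x)"
  by (cases "x = 0") (simp, simp add: F_def power_inverse)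
lemma F_divide: "F (x / y) = F x / F y"
  by (simp add: divide_inverse F_mult F_inverse)
lemma FF_pow: "F (F x) = x ^ (q^2)" by (simp add: F_def power_mult power2_eq_square)

end

context frob0 begin
lemma card_Fq_le: "card {x. F x = x} \<le> q"
proof (rule card_roots_monoms)
  let ?p = "monom (1::'a) q - monom 1 1"
  have "q \<noteq> Suc 0" using q2 by simp
  hence "coeff ?p q = 1" by (simp add: coeff_monom)
  thus "?p \<noteq> 0" by (metis coeff_0 zero_neq_one)
  have "degree (monom (1::'a) 1) \<le> q" using degree_monom_le[of "1::'a" 1] q2 by linarith
  thus "degree ?p \<le> q" by (intro degree_diff_le) (auto simp: degree_monom_le)
  show "{x. F x = x} = {x. poly ?p x = 0}" by (auto simp: F_def poly_monom)
qed

lemma card_kerTr_le: "card {x. x + F x + F (F x) = 0} \<le> q^2"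
proof (rule card_roots_monoms)
  let ?p = "monom (1::'a) (q^2) + monom 1 q + monom 1 1"
  have "q < q^2" using q2 by (simp add: power2_eq_square)
  hence "q \<noteq> q^2" "Suc 0 \<noteq> q^2" using q2 by auto
  hence "coeff ?p (q^2) = 1" by (simp add: coeff_monom)
  thus "?p \<noteq> 0" by (metis coeff_0 zero_neq_one)
  have "q \<le> q^2" "1 \<le> q^2" using q2 \<open>q < q^2\<close> by auto
  thus "degree ?p \<le> q^2" by (intro degree_add_le) (auto simp: degree_monom_le intro: order.trans[OF degree_monom_le])
  show "{x. x + F x + F (F x) = 0} = {x. poly ?p x = 0}" by (simp only: FF_pow) (simp add: F_def poly_monom add_ac)
qed

lemma card_Fq: "card {x. F x = x} = q" and card_kerTr: "card {x. x + F x + F (F x) = 0} = q^2"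
proof -
  let ?g = "\<lambda>x. F x - x" and ?T = "\<lambda>x. x + F x + F (F x)"
  have g: "card (UNIV::'a set) = card (range ?g) * card {x. ?g x = 0}"
    by (rule card_additive) (simp add: F_add)
  have T: "card (UNIV::'a set) = card (range ?T) * card {x. ?T x = 0}"
    by (rule card_additive) (simp add: F_add)
  have rg: "range ?g \<subseteq> {x. ?T x = 0}"
  proof
    fix y assume "y \<in> range ?g"
    then obtain x where y: "y = F x - x" by auto
    have "?T (F x - x) = 0" by (simp add: F_diff F3 algebra_simps)
    thus "y \<in> {x. ?T x = 0}" using y by simp
  qed
  have rT: "range ?T \<subseteq> {x. F x = x}"
  proof
    fix y assume "y \<in> range ?T"
    then obtain x where "y = ?T x" by auto
    thus "y \<in> {x. F x = x}" by (simp add: F_add F3 algebra_simps)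
  qed
  have c1: "card (range ?g) \<le> q^2"
    using card_mono[OF _ rg] card_kerTr_le by simp
  have c2: "card (range ?T) \<le> q"
    using card_mono[OF _ rT] card_Fq_le by simp
  have K: "{x. ?g x = 0} = {x. F x = x}" by auto
  have q3: "q^3 = q^2 * q" by (simp add: power3_eq_cube power2_eq_square)
  have "q^2 * q \<le> q^2 * card {x. F x = x}"
    using g mult_right_mono[OF c1, of "card {x. F x = x}"] cardU K q3 by simp
  hence "q \<le> card {x. F x = x}" using q2 by simp
  thus "card {x. F x = x} = q" using card_Fq_le by simp
  have "q * q^2 \<le> q * card {x. ?T x = 0}"
    using T mult_right_mono[OF c2, of "card {x. ?T x = 0}"] cardU q3 by (simp add: mult.commute)
  hence "q^2 \<le> card {x. ?T x = 0}" using q2 by simp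
  thus "card {x. ?T x = 0} = q^2" using card_kerTr_le by simp
qed

end

definition cross :: "'a::field tri \<Rightarrow> 'a tri \<Rightarrow> 'a tri" where
  "cross v w = (fst (snd v) * snd (snd w) - snd (snd v) * fst (snd w),
                snd (snd v) * fst w - fst v * snd (snd w),
                fst v * fst (snd w) - fst (snd v) * fst w)"

definition sc :: "'a::field \<Rightarrow> 'a tri \<Rightarrow> 'a tri" where
  "sc k v = (k * fst v, k * fst (snd v), k * snd (snd v))"

definition det3 :: "'a::field tri \<Rightarrow> 'a tri \<Rightarrow> 'a tri \<Rightarrow> 'a" where
  "det3 a b c = dot3 a (cross b c)"

lemma cross_simp[simp]: "cross (a,b,c) (d,e,f) = (b*f - c*e, c*d - a*f, a*e - b*d)"
  by (simp add: cross_def)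
lemma sc_simp[simp]: "sc k (a,b,c) = (k*a, k*b, k*c)"
  by (simp add: sc_def)
lemma dot3_simp[simp]: "dot3 (a,b,c) (d,e,f) = a*d + b*e + c*f"
  by (simp add: dot3_def)
lemma dot3_comm: "dot3 v w = dot3 w v"
  by (simp add: dot3_def mult.commute)

lemma mem_cls: "w \<in> cls v \<longleftrightarrow> (\<exists>k. k \<noteq> 0 \<and> w = sc k v)"
  by (auto simp: cls_def sc_def)

lemma sc_sc: "sc c (sc k v) = sc (c * k) v"
  by (simp add: sc_def mult.assoc)

lemma cls_sc: assumes k: "k \<noteq> 0" shows "cls (sc k v) = cls v"
proof (rule Set.set_eqI)
  fix x
  show "x \<in> cls (sc k v) \<longleftrightarrow> x \<in> cls v"
  proof
    assume "x \<in> cls (sc k v)"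
    then obtain c where c: "c \<noteq> 0" "x = sc (c * k) v" by (auto simp: mem_cls sc_sc)
    have "c * k \<noteq> 0" using c k by simp
    thus "x \<in> cls v" using c unfolding mem_cls by blast
  next
    assume "x \<in> cls v"
    then obtain c where c: "c \<noteq> 0" "x = sc c v" by (auto simp: mem_cls)
    hence "x = sc (c / k) (sc k v)" using k by (simp add: sc_sc)
    moreover have "c / k \<noteq> 0" using k c by simp
    ultimately show "x \<in> cls (sc k v)" unfolding mem_cls by blast
  qed
qed

lemma self_in_cls: "v \<in> cls v"
  unfolding mem_cls by (rule exI[of _ 1]) (simp add: sc_def)

lemma cls_eqD: "cls v = cls w \<Longrightarrow> \<exists>k. k \<noteq> 0 \<and> w = sc k v"
  using self_in_cls[of w] mem_cls by blast

lemma sc_zero_iff: "sc k v = (0,0,0) \<longleftrightarrow> k = 0 \<or> v = (0,0,0)"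
  by (cases v) auto

lemma PG_lines_eq: "PG_lines = PG_points"
  by (simp add: PG_lines_def PG_points_def)

lemma cls_in_PG: "v \<noteq> (0,0,0) \<Longrightarrow> cls v \<in> PG_points"
  unfolding PG_points_def by blast

lemma PG_points_iff: "P \<in> PG_points \<longleftrightarrow> (\<exists>v. v \<noteq> (0,0,0) \<and> P = cls v)"
proof
  assume "P \<in> PG_points" thus "\<exists>v. v \<noteq> (0,0,0) \<and> P = cls v" unfolding PG_points_def by blast
next
  assume "\<exists>v. v \<noteq> (0,0,0) \<and> P = cls v" thus "P \<in> PG_points" using cls_in_PG by blast
qed

lemma dot3_sc: "dot3 (sc k v) w = k * dot3 v w" "dot3 v (sc k w) = k * dot3 v w"
  by (auto simp: dot3_def sc_def algebra_simps)

lemma incid_cls: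
  assumes "v \<noteq> (0,0,0)" "w \<noteq> (0,0,0)"
  shows "incid (cls v) (cls w) \<longleftrightarrow> dot3 v w = 0"
proof
  assume "incid (cls v) (cls w)"
  then obtain v' w' where "v' \<in> cls v" "w' \<in> cls w" "dot3 v' w' = 0" by (auto simp: incid_def)
  then obtain k l where "k \<noteq> 0" "l \<noteq> 0" "v' = sc k v" "w' = sc l w" by (auto simp: mem_cls)
  thus "dot3 v w = 0" using \<open>dot3 v' w' = 0\<close> by (simp add: dot3_sc)
next
  assume "dot3 v w = 0"
  thus "incid (cls v) (cls w)" using assms self_in_cls[of v] self_in_cls[of w]
    by (auto simp: incid_def cls_in_PG PG_lines_eq)
qed

lemma parallel:
  assumes "x \<noteq> (0,0,0)" "cross x l = (0,0,0)"
  shows "\<exists>k. l = sc k x"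
proof -
  obtain a b c where x: "x = (a,b,c)" by (cases x)
  obtain d e f where l: "l = (d,e,f)" by (cases l)
  have h: "b*f = c*e" "c*d = a*f" "a*e = b*d" using assms(2) x l by (auto simp: right_minus_eq)
  show ?thesis
  proof (cases "a \<noteq> 0")
    case True
    hence "l = sc (d/a) x" using h x l by (auto simp: field_simps)
    thus ?thesis by blast
  next
    case a0: False
    show ?thesis
    proof (cases "b \<noteq> 0")
      case True
      hence "l = sc (e/b) x" using h x l a0 by (auto simp: field_simps)
      thus ?thesis by blast
    next
      case False
      hence "c \<noteq> 0" using a0 assms(1) x by auto
      hence "l = sc (f/c) x" using h x l a0 False by (auto simp: field_simps)
      thus ?thesis by blast
    qed
  qed
qed

lemma cross_sc_self: "cross v (sc k v) = (0,0,0)"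
  by (cases v) (auto simp: algebra_simps)

lemma cross_zero_iff:
  "v \<noteq> (0,0,0) \<Longrightarrow> cross v w = (0,0,0) \<longleftrightarrow> (\<exists>k. w = sc k v)"
  using parallel cross_sc_self by blast

lemma cls_eq_iff_cross:
  assumes "v \<noteq> (0,0,0)" "w \<noteq> (0,0,0)"
  shows "cls v = cls w \<longleftrightarrow> cross v w = (0,0,0)"
proof
  assume "cls v = cls w"
  then obtain k where "w = sc k v" using cls_eqD by blast
  thus "cross v w = (0,0,0)" by (simp add: cross_sc_self)
next
  assume "cross v w = (0,0,0)"
  then obtain k where k: "w = sc k v" using parallel assms by blast
  hence "k \<noteq> 0" using assms(2) by (auto simp: sc_zero_iff)
  thus "cls v = cls w" using k cls_sc by metis
qed

lemma dot_cross1: "dot3 v (cross v w) = 0" and dot_cross2: "dot3 w (cross v w) = 0"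
  by (cases v; cases w; simp add: algebra_simps)+

lemma perp_unique:
  assumes "cross v w \<noteq> (0,0,0)" "dot3 v l = 0" "dot3 w l = 0"
  shows "\<exists>k. l = sc k (cross v w)"
proof -
  obtain a b c where v: "v = (a,b,c)" by (cases v)
  obtain d e f where w: "w = (d,e,f)" by (cases w)
  obtain x y z where l: "l = (x,y,z)" by (cases l)
  have "cross (cross (a,b,c) (d,e,f)) (x,y,z) = ((a*x+b*y+c*z)*d - (d*x+e*y+f*z)*a,
     (a*x+b*y+c*z)*e - (d*x+e*y+f*z)*b, (a*x+b*y+c*z)*f - (d*x+e*y+f*z)*c)"
    by (simp add: algebra_simps)
  also have "\<dots> = (0,0,0)" using assms(2,3) v w l by simp
  finally have "cross (cross v w) l = (0,0,0)" using v w l by simp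
  thus ?thesis using parallel assms(1) by blast
qed

lemma unique_line_vec:
  assumes "cross v w \<noteq> (0,0,0)" "l \<noteq> (0,0,0)" "dot3 v l = 0" "dot3 w l = 0"
  shows "cls l = cls (cross v w)"
proof -
  obtain k where k: "l = sc k (cross v w)" using perp_unique assms by blast
  hence "k \<noteq> 0" using assms(2) by (auto simp: sc_zero_iff)
  thus ?thesis using k cls_sc by metis
qed

lemma cross_0_left[simp]: "cross (0,0,0) w = (0,0,0)" by (cases w) simp
lemma cross_0_right[simp]: "cross v (0,0,0) = (0,0,0)" by (cases v) simp
lemma cross_nz_left: "cross v w \<noteq> (0,0,0) \<Longrightarrow> v \<noteq> (0,0,0)"
  by auto
lemma cross_nz_right: "cross v w \<noteq> (0,0,0) \<Longrightarrow> w \<noteq> (0,0,0)"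
  by auto

lemma join_cls:
  assumes "cross v w \<noteq> (0,0,0)"
  shows "Defs.join (cls v) (cls w) = cls (cross v w)"
  unfolding Defs.join_def
proof (rule the_equality)
  have v: "v \<noteq> (0,0,0)" and w: "w \<noteq> (0,0,0)" using assms cross_nz_left cross_nz_right by auto
  show "cls (cross v w) \<in> PG_lines \<and> incid (cls v) (cls (cross v w)) \<and> incid (cls w) (cls (cross v w))"
    using assms v w by (simp add: PG_lines_eq cls_in_PG incid_cls dot_cross1 dot_cross2)
  fix l assume "l \<in> PG_lines \<and> incid (cls v) l \<and> incid (cls w) l"
  then obtain u where u: "u \<noteq> (0,0,0)" "l = cls u" "incid (cls v) (cls u)" "incid (cls w) (cls u)"
    by (auto simp: PG_lines_eq PG_points_iff)
  hence "dot3 v u = 0" "dot3 w u = 0" using incid_cls[OF v u(1)] incid_cls[OF w u(1)] by simp_all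
  thus "l = cls (cross v w)" using unique_line_vec[OF assms u(1)] u(2) by simp
qed

lemma meet_cls:
  assumes "cross v w \<noteq> (0,0,0)"
  shows "Defs.meet (cls v) (cls w) = cls (cross v w)"
  unfolding Defs.meet_def
proof (rule the_equality)
  have v: "v \<noteq> (0,0,0)" and w: "w \<noteq> (0,0,0)" using assms cross_nz_left cross_nz_right by auto
  show "cls (cross v w) \<in> PG_points \<and> incid (cls (cross v w)) (cls v) \<and> incid (cls (cross v w)) (cls w)"
    using assms v w by (simp add: cls_in_PG incid_cls dot_cross1 dot_cross2 dot3_comm[of "cross v w"])
  fix P assume "P \<in> PG_points \<and> incid P (cls v) \<and> incid P (cls w)"
  then obtain u where u: "u \<noteq> (0,0,0)" "P = cls u" "incid (cls u) (cls v)" "incid (cls u) (cls w)"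
    by (auto simp: PG_points_iff)
  hence "dot3 v u = 0" "dot3 w u = 0" using v w incid_cls dot3_comm by metis+
  thus "P = cls (cross v w)" using unique_line_vec[OF assms u(1)] u(2) by simp
qed

definition perpv :: "'a::field tri \<Rightarrow> 'a tri" where
  "perpv v = (if fst v \<noteq> 0 \<or> fst (snd v) \<noteq> 0 then (fst (snd v), - fst v, 0) else (1,0,0))"

lemma perpv: "perpv v \<noteq> (0,0,0)" "dot3 v (perpv v) = 0"
  by (cases v; auto simp: perpv_def)+

lemma ex_perp:
  assumes "a \<noteq> (0,0,0)" "b \<noteq> (0,0,0)" "c \<noteq> (0,0,0)"
  shows "(\<exists>u. u \<noteq> (0,0,0) \<and> dot3 a u = 0 \<and> dot3 b u = 0 \<and> dot3 c u = 0) \<longleftrightarrow> det3 a b c = 0"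
proof
  assume "\<exists>u. u \<noteq> (0,0,0) \<and> dot3 a u = 0 \<and> dot3 b u = 0 \<and> dot3 c u = 0"
  then obtain u where u: "u \<noteq> (0,0,0)" "dot3 a u = 0" "dot3 b u = 0" "dot3 c u = 0" by blast
  show "det3 a b c = 0"
  proof (cases "cross b c = (0,0,0)")
    case True thus ?thesis by (simp add: det3_def dot3_def)
  next
    case False
    then obtain k where "u = sc k (cross b c)" using perp_unique u by blast
    moreover have "k \<noteq> 0" using u(1) calculation by (auto simp: sc_zero_iff)
    ultimately show ?thesis using u(2) by (simp add: det3_def dot3_sc)
  qed
next
  assume d: "det3 a b c = 0"
  show "\<exists>u. u \<noteq> (0,0,0) \<and> dot3 a u = 0 \<and> dot3 b u = 0 \<and> dot3 c u = 0"
  proof (cases "cross b c = (0,0,0)")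
    case False
    thus ?thesis using d by (intro exI[of _ "cross b c"]) (simp add: det3_def dot_cross1 dot_cross2)
  next
    case True
    then obtain k where ck: "c = sc k b" using parallel assms by blast
    show ?thesis
    proof (cases "cross a b = (0,0,0)")
      case False
      thus ?thesis using ck
        by (intro exI[of _ "cross a b"]) (simp add: dot_cross1 dot_cross2 dot3_sc)
    next
      case True
      then obtain k' where bk: "b = sc k' a" using parallel assms by blast
      show ?thesis using ck bk perpv[of a]
        by (intro exI[of _ "perpv a"]) (simp add: dot3_sc)
    qed
  qed
qed

lemma collinear3_cls:
  assumes "a \<noteq> (0,0,0)" "b \<noteq> (0,0,0)" "c \<noteq> (0,0,0)"
  shows "collinear3 (cls a) (cls b) (cls c) \<longleftrightarrow> det3 a b c = 0"
proof -
  have "collinear3 (cls a) (cls b) (cls c) \<longleftrightarrow>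
        (\<exists>u. u \<noteq> (0,0,0) \<and> dot3 a u = 0 \<and> dot3 b u = 0 \<and> dot3 c u = 0)"
    (is "?L \<longleftrightarrow> ?R")
  proof
    assume "collinear3 (cls a) (cls b) (cls c)"
    then obtain l where l: "l \<in> PG_points" "incid (cls a) l" "incid (cls b) l" "incid (cls c) l"
      unfolding collinear3_def PG_lines_eq by blast
    then obtain u where "u \<noteq> (0,0,0)" "l = cls u" unfolding PG_points_iff by blast
    hence "u \<noteq> (0,0,0)" "incid (cls a) (cls u)" "incid (cls b) (cls u)" "incid (cls c) (cls u)"
      using l by auto
    thus "\<exists>u. u \<noteq> (0,0,0) \<and> dot3 a u = 0 \<and> dot3 b u = 0 \<and> dot3 c u = 0"
      using assms incid_cls by blast
  next
    assume "\<exists>u. u \<noteq> (0,0,0) \<and> dot3 a u = 0 \<and> dot3 b u = 0 \<and> dot3 c u = 0"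
    then obtain u where "u \<noteq> (0,0,0)" "dot3 a u = 0" "dot3 b u = 0" "dot3 c u = 0" by blast
    thus "collinear3 (cls a) (cls b) (cls c)" unfolding collinear3_def PG_lines_eq
      using assms incid_cls cls_in_PG by blast
  qed
  thus ?thesis using ex_perp[OF assms] by simp
qed

lemma concurrent3_cls:
  assumes "a \<noteq> (0,0,0)" "b \<noteq> (0,0,0)" "c \<noteq> (0,0,0)"
  shows "concurrent3 (cls a) (cls b) (cls c) \<longleftrightarrow> det3 a b c = 0"
proof -
  have "concurrent3 (cls a) (cls b) (cls c) \<longleftrightarrow>
        (\<exists>u. u \<noteq> (0,0,0) \<and> dot3 a u = 0 \<and> dot3 b u = 0 \<and> dot3 c u = 0)"
    (is "?L \<longleftrightarrow> ?R")
  proof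
    assume "concurrent3 (cls a) (cls b) (cls c)"
    then obtain l where l: "l \<in> PG_points" "incid l (cls a)" "incid l (cls b)" "incid l (cls c)"
      unfolding concurrent3_def by blast
    then obtain u where "u \<noteq> (0,0,0)" "l = cls u" unfolding PG_points_iff by blast
    hence "u \<noteq> (0,0,0)" "incid (cls u) (cls a)" "incid (cls u) (cls b)" "incid (cls u) (cls c)"
      using l by auto
    thus "\<exists>u. u \<noteq> (0,0,0) \<and> dot3 a u = 0 \<and> dot3 b u = 0 \<and> dot3 c u = 0"
      using assms incid_cls dot3_comm by metis
  next
    assume "\<exists>u. u \<noteq> (0,0,0) \<and> dot3 a u = 0 \<and> dot3 b u = 0 \<and> dot3 c u = 0"
    then obtain u where "u \<noteq> (0,0,0)" "dot3 a u = 0" "dot3 b u = 0" "dot3 c u = 0" by blast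
    moreover have "dot3 u a = 0" "dot3 u b = 0" "dot3 u c = 0" using calculation dot3_comm by metis+
    ultimately show "concurrent3 (cls a) (cls b) (cls c)" unfolding concurrent3_def
      using assms incid_cls cls_in_PG by blast
  qed
  thus ?thesis using ex_perp[OF assms] by simp
qed

lemma unique_line:
  assumes "P \<in> PG_points" "Q \<in> PG_points" "P \<noteq> Q"
    "incid P l" "incid Q l" "incid P m" "incid Q m"
  shows "l = m"
proof -
  obtain v where v: "v \<noteq> (0,0,0)" "P = cls v" using assms(1) unfolding PG_points_iff by blast
  obtain w where w: "w \<noteq> (0,0,0)" "Q = cls w" using assms(2) unfolding PG_points_iff by blast
  note vw = v(1) w(1) v(2) w(2)
  have c: "cross v w \<noteq> (0,0,0)" using cls_eq_iff_cross vw assms(3) by metis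
  have "l = cls (cross v w)" if "incid P l" "incid Q l" for l
  proof -
    have "l \<in> PG_points" using that(1) by (simp add: incid_def PG_lines_eq)
    then obtain u where u: "u \<noteq> (0,0,0)" "l = cls u" unfolding PG_points_iff by blast
    hence "dot3 v u = 0" "dot3 w u = 0" using that incid_cls[OF vw(1) u(1)] incid_cls[OF vw(2) u(1)] vw by simp_all
    thus ?thesis using unique_line_vec[OF c u(1)] u(2) by simp
  qed
  thus ?thesis using assms by metis
qed

definition ogv :: "('a::field \<Rightarrow> 'a) \<Rightarrow> 'a \<Rightarrow> 'a tri \<Rightarrow> 'a tri" where
  "ogv F r v = (r * fst v, F r * fst (snd v), F (F r) * snd (snd v))"
definition OG :: "('a::field \<Rightarrow> 'a) \<Rightarrow> 'a tri \<Rightarrow> 'a tri set set" where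
  "OG F v = {cls (ogv F r v) | r. r \<noteq> 0}"
definition frobv :: "('a::field \<Rightarrow> 'a) \<Rightarrow> 'a tri \<Rightarrow> 'a tri" where
  "frobv F v = (F (snd (snd v)), F (fst v), F (fst (snd v)))"
definition muv :: "('a::field \<Rightarrow> 'a) \<Rightarrow> 'a tri \<Rightarrow> 'a tri" where
  "muv F v = (let a = fst v; b = fst (snd v); c = snd (snd v) in
     (F a * F (F a) - F b * F (F c), F b * F (F b) - F c * F (F a), F c * F (F c) - F a * F (F b)))"
definition inv3 :: "'a::field tri \<Rightarrow> 'a tri" where
  "inv3 v = (1 / fst v, 1 / fst (snd v), 1 / snd (snd v))"
definition nz3 :: "'a::field tri \<Rightarrow> bool" where
  "nz3 v \<longleftrightarrow> fst v \<noteq> 0 \<and> fst (snd v) \<noteq> 0 \<and> snd (snd v) \<noteq> 0"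
definition nz2 :: "'a::field tri \<Rightarrow> bool" where
  "nz2 v \<longleftrightarrow> (fst v \<noteq> 0 \<and> fst (snd v) \<noteq> 0) \<or> (fst (snd v) \<noteq> 0 \<and> snd (snd v) \<noteq> 0)
     \<or> (fst v \<noteq> 0 \<and> snd (snd v) \<noteq> 0)"

lemma ogv_simp[simp]: "ogv F r (a,b,c) = (r*a, F r * b, F (F r) * c)" by (simp add: ogv_def)
lemma frobv_simp[simp]: "frobv F (a,b,c) = (F c, F a, F b)" by (simp add: frobv_def)
lemma muv_simp[simp]: "muv F (a,b,c) = (F a * F (F a) - F b * F (F c), F b * F (F b) - F c * F (F a), F c * F (F c) - F a * F (F b))"
  by (simp add: muv_def)
lemma inv3_simp[simp]: "inv3 (a,b,c) = (1/a, 1/b, 1/c)" by (simp add: inv3_def)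
lemma nz3_simp[simp]: "nz3 (a,b,c) \<longleftrightarrow> a \<noteq> 0 \<and> b \<noteq> 0 \<and> c \<noteq> 0" by (simp add: nz3_def)
lemma nz2_simp[simp]: "nz2 (a,b,c) \<longleftrightarrow> (a \<noteq> 0 \<and> b \<noteq> 0) \<or> (b \<noteq> 0 \<and> c \<noteq> 0) \<or> (a \<noteq> 0 \<and> c \<noteq> 0)"
  by (simp add: nz2_def)
lemma nz3_nz2: "nz3 v \<Longrightarrow> nz2 v" by (simp add: nz3_def nz2_def)
lemma nz2_nz: "nz2 v \<Longrightarrow> v \<noteq> (0,0,0)" by (auto simp: nz2_def)
lemma nz3_inv3: "nz3 v \<Longrightarrow> nz3 (inv3 v)" by (cases v) simp
lemma inv3_inv3: "nz3 v \<Longrightarrow> inv3 (inv3 v) = v" by (cases v) simp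

context frob0
begin

abbreviation "T x \<equiv> x + F x + F (F x)"

lemmas Fs = F_mult F_add F3 F_inverse F_divide F_minus F_diff

lemma F2_eq0[simp]: "F (F x) = 0 \<longleftrightarrow> x = 0" by simp

lemma ogv_nz: "r \<noteq> 0 \<Longrightarrow> nz2 v \<Longrightarrow> ogv F r v \<noteq> (0,0,0)"
  by (cases v) auto

lemma frob_vec_eq: "frob_vec q v = frobv F v"
  by (cases v) (simp add: frob_vec_def F_def)

lemma frobv_sc: "frobv F (sc k v) = sc (F k) (frobv F v)"
  by (cases v) (simp add: F_mult)

lemma F_surj: "\<exists>y. x = F y" using F3 by metis

lemma phi_cls: "phi q (cls v) = cls (frobv F v)"
proof -
  have "phi q (cls v) = frobv F ` cls v" by (simp add: phi_def frob_vec_eq[abs_def])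
  also have "\<dots> = cls (frobv F v)"
  proof (rule Set.set_eqI)
    fix x show "x \<in> frobv F ` cls v \<longleftrightarrow> x \<in> cls (frobv F v)"
    proof
      assume "x \<in> frobv F ` cls v"
      then obtain y where y: "y \<in> cls v" "x = frobv F y" by blast
      then obtain k where k: "k \<noteq> 0" "x = frobv F (sc k v)" unfolding mem_cls by blast
      have "F k \<noteq> 0" using k by simp
      thus "x \<in> cls (frobv F v)" using k unfolding mem_cls frobv_sc by blast
    next
      assume "x \<in> cls (frobv F v)"
      then obtain k where k: "k \<noteq> 0" "x = sc k (frobv F v)" by (auto simp: mem_cls)
      obtain j where j: "k = F j" using F_surj by blast
      hence "j \<noteq> 0" using k by auto
      moreover have "x = frobv F (sc j v)" using k j by (simp add: frobv_sc)
      moreover have "sc j v \<in> cls v" using \<open>j \<noteq> 0\<close> unfolding mem_cls by blast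
      ultimately show "x \<in> frobv F ` cls v" by blast
    qed
  qed
  finally show ?thesis .
qed

lemma psi_vec_eq: "psi_vec q t v = ogv F t v"
  by (cases v) (simp add: psi_vec_def F_def[symmetric] FF_pow[symmetric])

lemma ogv_sc: "ogv F t (sc k v) = sc k (ogv F t v)"
  by (cases v) (simp add: algebra_simps)

lemma psi_cls: "psi_vec q t ` cls v = cls (ogv F t v)"
proof (rule Set.set_eqI)
  fix x show "x \<in> psi_vec q t ` cls v \<longleftrightarrow> x \<in> cls (ogv F t v)"
  proof
    assume "x \<in> psi_vec q t ` cls v"
    then obtain y where y: "y \<in> cls v" "x = psi_vec q t y" by blast
    then obtain k where "k \<noteq> 0" "x = ogv F t (sc k v)" unfolding mem_cls psi_vec_eq by blast
    thus "x \<in> cls (ogv F t v)" unfolding mem_cls ogv_sc by blast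
  next
    assume "x \<in> cls (ogv F t v)"
    then obtain k where k: "k \<noteq> 0" "x = ogv F t (sc k v)" unfolding mem_cls ogv_sc by blast
    have "sc k v \<in> cls v" using k unfolding mem_cls by blast
    thus "x \<in> psi_vec q t ` cls v" using k unfolding psi_vec_eq by blast
  qed
qed

lemma orbit_ST_cls: "orbit_ST q (cls v) = OG F v"
  by (simp add: orbit_ST_def OG_def psi_cls)

lemma Pi_theta_OG: "Pi_theta q \<theta> = OG F (\<theta> * F \<theta>, 1, \<theta>)"
proof -
  have "\<And>r. r * \<theta> ^ (q + 1) = r * (\<theta> * F \<theta>)" "\<And>r. r ^ q = F r" "\<And>r. r ^ (q^2) = F (F r)"
    by (simp add: F_def power_add mult.commute, simp add: F_def, rule FF_pow[symmetric])
  thus ?thesis by (simp add: Pi_theta_def OG_def)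
qed

lemma S_theta_OG: "S_theta q \<theta> = OG F (\<theta>, 1, 0)"
  by (simp add: S_theta_def OG_def F_def)

lemma ogv_frobv: "frobv F (ogv F r v) = ogv F r (frobv F v)"
  by (cases v) (simp add: F_mult F3)

lemma phi_OG: "phi q ` OG F v = OG F (frobv F v)"
proof -
  have "phi q ` OG F v = (\<lambda>r. phi q (cls (ogv F r v))) ` {r. r \<noteq> 0}"
    unfolding OG_def by blast
  also have "\<dots> = (\<lambda>r. cls (ogv F r (frobv F v))) ` {r. r \<noteq> 0}"
    by (simp add: phi_cls ogv_frobv)
  also have "\<dots> = OG F (frobv F v)" unfolding OG_def by blast
  finally show ?thesis .
qed

lemma K1: assumes "r \<noteq> 0"
  shows "cross (frobv F (ogv F r v)) (frobv F (frobv F (ogv F r v)))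
       = sc (r * F r * F (F r)) (ogv F (1/r) (muv F v))"
proof -
  obtain a b c where v: "v = (a,b,c)" by (cases v)
  show ?thesis using assms unfolding v
    by (simp add: Fs field_simps)
qed

lemma K2: assumes "nz3 v"
  shows "dot3 (ogv F r v) (ogv F s (inv3 v)) = T (r * s)"
proof -
  obtain a b c where v: "v = (a,b,c)" by (cases v)
  show ?thesis using assms unfolding v
    by (simp add: Fs field_simps)
qed

lemma K3: assumes "nz3 v"
  shows "cross (ogv F r v) (ogv F s v)
     = sc (fst v * fst (snd v) * snd (snd v)) (ogv F (F (r * F s - F r * s)) (inv3 v))"
proof -
  obtain a b c where v: "v = (a,b,c)" by (cases v)
  show ?thesis using assms unfolding v
    by (simp add: Fs field_simps)
qed

end

lemma arith1: "(q::nat) \<ge> 2 \<Longrightarrow> q^3 - 1 = (q^2+q+1)*(q-1)"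
proof -
  assume "q \<ge> 2" then obtain m where "q = m + 1" by (metis add.commute le_Suc_ex one_add_one add_leD1)
  thus ?thesis by (simp add: power2_eq_square power3_eq_cube algebra_simps)
qed

lemma arith2: "(q::nat) \<ge> 2 \<Longrightarrow> q^2 - 1 = (q+1)*(q-1)"
proof -
  assume "q \<ge> 2" then obtain m where "q = m + 1" by (metis add.commute le_Suc_ex one_add_one add_leD1)
  thus ?thesis by (simp add: power2_eq_square algebra_simps)
qed

context frob0
begin

definition "Fqs = {k. k \<noteq> 0 \<and> F k = k}"

lemma card_Fqs: "card Fqs = q - 1"
proof -
  have "Fqs = {k. F k = k} - {0}" by (auto simp: Fqs_def)
  thus ?thesis using card_Fq by (simp add: card_Diff_singleton)
qed

lemma card_nonzero: "card {r::'a. r \<noteq> 0} = q^3 - 1"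
proof -
  have "{r::'a. r \<noteq> 0} = UNIV - {0}" by auto
  thus ?thesis using cardU by (simp add: card_Diff_singleton)
qed

lemma ogv_mult_Fq: "F k = k \<Longrightarrow> ogv F (k * r) v = sc k (ogv F r v)"
  by (cases v) (simp add: F_mult)

lemma T_mult_Fq: "F k = k \<Longrightarrow> T (k * x) = k * T x"
  by (simp add: F_mult algebra_simps)

lemma fiber:
  assumes "nz2 v" "r \<noteq> 0" "s \<noteq> 0"
  shows "cls (ogv F s v) = cls (ogv F r v) \<longleftrightarrow> (\<exists>k. k \<noteq> 0 \<and> F k = k \<and> s = k * r)"
proof
  assume "\<exists>k. k \<noteq> 0 \<and> F k = k \<and> s = k * r"
  then obtain k where k: "k \<noteq> 0" "F k = k" "s = k * r" by blast
  thus "cls (ogv F s v) = cls (ogv F r v)" by (simp add: ogv_mult_Fq cls_sc)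
next
  assume "cls (ogv F s v) = cls (ogv F r v)"
  then obtain k where k: "k \<noteq> 0" "ogv F s v = sc k (ogv F r v)" using cls_eqD by metis
  obtain a b c where v: "v = (a,b,c)" by (cases v)
  have e: "s * a = k * (r * a)" "F s * b = k * (F r * b)" "F (F s) * c = k * (F (F r) * c)"
    using k(2) unfolding v by simp_all
  have "(a \<noteq> 0 \<and> b \<noteq> 0) \<or> (b \<noteq> 0 \<and> c \<noteq> 0) \<or> (a \<noteq> 0 \<and> c \<noteq> 0)" using assms(1) v by simp
  moreover
  { assume ab: "a \<noteq> 0" "b \<noteq> 0"
    have s: "s = k * r" using e(1) ab by simp
    have "F s = k * F r" using e(2) ab by simp
    hence "F k * F r = k * F r" using s by (simp add: F_mult)
    hence "F k = k" using assms(2) by simp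
    hence "\<exists>k. k \<noteq> 0 \<and> F k = k \<and> s = k * r" using s k by blast }
  moreover
  { assume bc: "b \<noteq> 0" "c \<noteq> 0"
    have s1: "F s = k * F r" using e(2) bc by simp
    have s2: "F (F s) = k * F (F r)" using e(3) bc by simp
    have "F k * F (F r) = k * F (F r)" using s1 s2 by (simp add: F_mult)
    hence Fk: "F k = k" using assms(2) by simp
    have "s = F (F (F s))" by (simp add: F3)
    also have "\<dots> = k * r" using s1 Fk by (simp add: F_mult F3)
    finally have "\<exists>k. k \<noteq> 0 \<and> F k = k \<and> s = k * r" using Fk k by blast }
  moreover
  { assume ac: "a \<noteq> 0" "c \<noteq> 0"
    have s: "s = k * r" using e(1) ac by simp
    have "F (F s) = k * F (F r)" using e(3) ac by simp
    hence "F (F k) * F (F r) = k * F (F r)" using s by (simp add: F_mult)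
    hence FFk: "F (F k) = k" using assms(2) by simp
    have "F k = F (F (F k))" using FFk by simp
    hence "F k = k" by (simp add: F3)
    hence "\<exists>k. k \<noteq> 0 \<and> F k = k \<and> s = k * r" using s k by blast }
  ultimately show "\<exists>k. k \<noteq> 0 \<and> F k = k \<and> s = k * r" by blast
qed

lemma fiber_set:
  assumes "nz2 v" "r \<noteq> 0" "A \<subseteq> {r. r \<noteq> 0}" "r \<in> A" "\<And>k x. k \<in> Fqs \<Longrightarrow> x \<in> A \<Longrightarrow> k * x \<in> A"
  shows "card {s\<in>A. cls (ogv F s v) = cls (ogv F r v)} = q - 1"
proof -
  have "{s\<in>A. cls (ogv F s v) = cls (ogv F r v)} = (\<lambda>k. k * r) ` Fqs"
  proof (rule Set.set_eqI)
    fix s show "s \<in> {s\<in>A. cls (ogv F s v) = cls (ogv F r v)} \<longleftrightarrow> s \<in> (\<lambda>k. k * r) ` Fqs"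
    proof
      assume "s \<in> {s\<in>A. cls (ogv F s v) = cls (ogv F r v)}"
      hence "s \<in> A" "cls (ogv F s v) = cls (ogv F r v)" by auto
      moreover have "s \<noteq> 0" using calculation assms(3) by auto
      ultimately obtain k where "k \<noteq> 0" "F k = k" "s = k * r" using fiber assms by metis
      thus "s \<in> (\<lambda>k. k * r) ` Fqs" by (auto simp: Fqs_def)
    next
      assume "s \<in> (\<lambda>k. k * r) ` Fqs"
      then obtain k where k: "k \<in> Fqs" "s = k * r" by blast
      hence "s \<in> A" using assms(4,5) by blast
      moreover have "s \<noteq> 0" using k assms(2) by (auto simp: Fqs_def)
      moreover have "cls (ogv F s v) = cls (ogv F r v)" using fiber[OF assms(1,2) \<open>s \<noteq> 0\<close>] k
        by (auto simp: Fqs_def)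
      ultimately show "s \<in> {s\<in>A. cls (ogv F s v) = cls (ogv F r v)}" by blast
    qed
  qed
  also have "card \<dots> = card Fqs" using assms(2) by (intro card_image) (auto simp: inj_on_def)
  finally show ?thesis using card_Fqs by simp
qed

lemma count_orbits:
  assumes "nz2 v" "A \<subseteq> {r. r \<noteq> 0}" "\<And>k x. k \<in> Fqs \<Longrightarrow> x \<in> A \<Longrightarrow> k * x \<in> A"
  shows "card A = card ((\<lambda>r. cls (ogv F r v)) ` A) * (q - 1)"
proof (rule card_fibres)
  show "finite A" by simp
  fix b assume "b \<in> (\<lambda>r. cls (ogv F r v)) ` A"
  then obtain r where r: "r \<in> A" "b = cls (ogv F r v)" by blast
  hence "r \<noteq> 0" using assms(2) by auto
  show "card {x \<in> A. cls (ogv F x v) = b} = q - 1"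
    using fiber_set[OF assms(1) \<open>r \<noteq> 0\<close> assms(2) r(1) assms(3)] r(2) by simp
qed

lemma OG_image: "OG F v = (\<lambda>r. cls (ogv F r v)) ` {r. r \<noteq> 0}"
  unfolding OG_def by blast

lemma card_OG:
  assumes "nz2 v"
  shows "card (OG F v) = q^2 + q + 1"
proof -
  have "card {r::'a. r \<noteq> 0} = card (OG F v) * (q - 1)"
    unfolding OG_image by (rule count_orbits[OF assms]) (auto simp: Fqs_def)
  hence "(q^2+q+1)*(q-1) = card (OG F v) * (q - 1)" using card_nonzero arith1[OF q2] by simp
  moreover have "q - 1 \<noteq> 0" using q2 by simp
  ultimately show ?thesis using mult_right_cancel[of "q - 1"] by (metis (no_types))
qed

lemma card_line:
  assumes "nz3 v" "u \<noteq> 0"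
  shows "card {P\<in>OG F v. incid P (cls (ogv F u (inv3 v)))} = q + 1"
proof -
  let ?A = "{r. r \<noteq> 0 \<and> T (r * u) = 0}"
  let ?g = "\<lambda>r. cls (ogv F r v)"
  have nzl: "ogv F u (inv3 v) \<noteq> (0,0,0)" using ogv_nz[OF assms(2) nz3_nz2[OF nz3_inv3[OF assms(1)]]] .
  have "{P\<in>OG F v. incid P (cls (ogv F u (inv3 v)))} = ?g ` ?A"
  proof (rule Set.set_eqI)
    fix P
    have "P \<in> OG F v \<and> incid P (cls (ogv F u (inv3 v))) \<longleftrightarrow> (\<exists>r. r \<noteq> 0 \<and> P = ?g r \<and> T (r * u) = 0)"
    proof
      assume h: "P \<in> OG F v \<and> incid P (cls (ogv F u (inv3 v)))"
      then obtain r where r: "r \<noteq> 0" "P = ?g r" unfolding OG_def by blast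
      have "dot3 (ogv F r v) (ogv F u (inv3 v)) = 0"
        using h r incid_cls[OF ogv_nz[OF r(1) nz3_nz2[OF assms(1)]] nzl] by simp
      thus "\<exists>r. r \<noteq> 0 \<and> P = ?g r \<and> T (r * u) = 0" using r K2[OF assms(1)] by metis
    next
      assume "\<exists>r. r \<noteq> 0 \<and> P = ?g r \<and> T (r * u) = 0"
      then obtain r where r: "r \<noteq> 0" "P = ?g r" "T (r * u) = 0" by blast
      have "incid P (cls (ogv F u (inv3 v)))"
        using r incid_cls[OF ogv_nz[OF r(1) nz3_nz2[OF assms(1)]] nzl] K2[OF assms(1)] by simp
      moreover have "P \<in> OG F v" using r unfolding OG_def by blast
      ultimately show "P \<in> OG F v \<and> incid P (cls (ogv F u (inv3 v)))" by blast
    qed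
    thus "P \<in> {P\<in>OG F v. incid P (cls (ogv F u (inv3 v)))} \<longleftrightarrow> P \<in> ?g ` ?A" by auto
  qed
  moreover have "card ?A = card (?g ` ?A) * (q - 1)"
  proof (rule count_orbits[OF nz3_nz2[OF assms(1)]])
    show "?A \<subseteq> {r. r \<noteq> 0}" by auto
    fix k x assume "k \<in> Fqs" "x \<in> ?A"
    thus "k * x \<in> ?A" using T_mult_Fq[of k "x * u"] by (auto simp: Fqs_def mult.assoc)
  qed
  moreover have "card ?A = q^2 - 1"
  proof -
    have "?A = (\<lambda>x. x / u) ` ({x. T x = 0} - {0})"
    proof (rule Set.set_eqI)
      fix r show "r \<in> ?A \<longleftrightarrow> r \<in> (\<lambda>x. x / u) ` ({x. T x = 0} - {0})"
      proof
        assume "r \<in> ?A" thus "r \<in> (\<lambda>x. x / u) ` ({x. T x = 0} - {0})"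
          using assms(2) by (intro image_eqI[of _ _ "r * u"]) auto
      qed (use assms(2) in auto)
    qed
    also have "card \<dots> = card ({x. T x = 0} - {0})"
      using assms(2) by (intro card_image) (auto simp: inj_on_def)
    also have "\<dots> = q^2 - 1" using card_kerTr by (simp add: card_Diff_singleton)
    finally show ?thesis .
  qed
  ultimately have "(q+1)*(q-1) = card {P\<in>OG F v. incid P (cls (ogv F u (inv3 v)))} * (q - 1)"
    using arith2[OF q2] by simp
  moreover have "q - 1 \<noteq> 0" using q2 by simp
  ultimately show ?thesis using mult_right_cancel[of "q - 1"] by (metis (no_types))
qed

end

lemma two_elems:
  assumes "finite S" "card S \<ge> 2"
  shows "\<exists>x y. x \<in> S \<and> y \<in> S \<and> x \<noteq> y"
proof (rule ccontr)
  assume "\<not> ?thesis"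
  hence "card S \<le> Suc 0" using card_le_Suc0_iff_eq[OF assms(1)] by blast
  thus False using assms(2) by simp
qed

lemma line_exists:
  assumes "P \<in> PG_points" "Q \<in> PG_points" "P \<noteq> Q"
  shows "\<exists>l\<in>PG_lines. incid P l \<and> incid Q l"
proof -
  obtain v where v: "v \<noteq> (0,0,0)" "P = cls v" using assms(1) unfolding PG_points_iff by blast
  obtain w where w: "w \<noteq> (0,0,0)" "Q = cls w" using assms(2) unfolding PG_points_iff by blast
  have c: "cross v w \<noteq> (0,0,0)" using cls_eq_iff_cross[OF v(1) w(1)] v w assms(3) by blast
  have "incid P (cls (cross v w))" using incid_cls[OF v(1) c] dot_cross1[of v w] v(2) by simp
  moreover have "incid Q (cls (cross v w))" using incid_cls[OF w(1) c] w(2) by (simp add: dot_cross2)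
  moreover have "cls (cross v w) \<in> PG_lines" using c cls_in_PG PG_lines_eq by metis
  ultimately show ?thesis by blast
qed

lemma noncol:
  assumes "P \<in> PG_points" "Q \<in> PG_points" "P \<noteq> Q" "incid P l" "incid Q l" "\<not> incid R l"
  shows "\<not> collinear3 P Q R"
proof
  assume "collinear3 P Q R"
  then obtain m where "m \<in> PG_lines" "incid P m" "incid Q m" "incid R m" unfolding collinear3_def by blast
  moreover have "m = l" using unique_line[OF assms(1-3)] calculation assms(4,5) by blast
  ultimately show False using assms(6) by simp
qed

context frob0
begin

lemma ogv_zero[simp]: "ogv F 0 v = (0,0,0)" by (cases v) simp

lemma LT:
  assumes "nz3 v" "P \<in> OG F v" "Q \<in> OG F v" "P \<noteq> Q" "incid P l" "incid Q l"
  shows "\<exists>u. u \<noteq> 0 \<and> l = cls (ogv F u (inv3 v))"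
proof -
  obtain r where r: "r \<noteq> 0" "P = cls (ogv F r v)" using assms(2) unfolding OG_def by blast
  obtain s where s: "s \<noteq> 0" "Q = cls (ogv F s v)" using assms(3) unfolding OG_def by blast
  have nr: "ogv F r v \<noteq> (0,0,0)" using ogv_nz[OF r(1) nz3_nz2[OF assms(1)]] .
  have ns: "ogv F s v \<noteq> (0,0,0)" using ogv_nz[OF s(1) nz3_nz2[OF assms(1)]] .
  have c: "cross (ogv F r v) (ogv F s v) \<noteq> (0,0,0)"
    using cls_eq_iff_cross[OF nr ns] r s assms(4) by blast
  have "l \<in> PG_points" using assms(5) by (simp add: incid_def PG_lines_eq)
  then obtain w where w: "w \<noteq> (0,0,0)" "l = cls w" unfolding PG_points_iff by blast
  have "dot3 (ogv F r v) w = 0" "dot3 (ogv F s v) w = 0"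
    using incid_cls[OF nr w(1)] incid_cls[OF ns w(1)] assms(5,6) r s w by auto
  hence l: "l = cls (cross (ogv F r v) (ogv F s v))" using unique_line_vec[OF c w(1)] w by simp
  define x where "x = F (r * F s - F r * s)"
  define k where "k = fst v * fst (snd v) * snd (snd v)"
  have k: "k \<noteq> 0" using assms(1) by (cases v) (simp add: k_def)
  have cr: "cross (ogv F r v) (ogv F s v) = sc k (ogv F x (inv3 v))"
    using K3[OF assms(1)] by (simp add: x_def k_def)
  have "x \<noteq> 0" using c cr by (auto simp: sc_def)
  moreover have "l = cls (ogv F x (inv3 v))" using l cr cls_sc[OF k] by simp
  ultimately show ?thesis by blast
qed

lemma OG_sub: "nz2 v \<Longrightarrow> OG F v \<subseteq> PG_points"
  unfolding OG_def using ogv_nz cls_in_PG by blast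

lemma lines_OG:
  assumes "nz3 v"
  shows "lines_of q (OG F v) = OG F (inv3 v)"
proof (rule Set.set_eqI)
  fix l
  show "l \<in> lines_of q (OG F v) \<longleftrightarrow> l \<in> OG F (inv3 v)"
  proof
    assume "l \<in> lines_of q (OG F v)"
    hence l: "l \<in> PG_lines" "card {P \<in> OG F v. incid P l} = q + 1" by (auto simp: lines_of_def)
    hence "card {P \<in> OG F v. incid P l} \<ge> 2" using q2 by simp
    then obtain P Q where "P \<in> {P \<in> OG F v. incid P l}" "Q \<in> {P \<in> OG F v. incid P l}" "P \<noteq> Q"
      using two_elems[of "{P \<in> OG F v. incid P l}"] by auto
    then obtain u where "u \<noteq> 0" "l = cls (ogv F u (inv3 v))" using LT[OF assms] by blast
    thus "l \<in> OG F (inv3 v)" unfolding OG_def by blast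
  next
    assume "l \<in> OG F (inv3 v)"
    then obtain u where u: "u \<noteq> 0" "l = cls (ogv F u (inv3 v))" unfolding OG_def by blast
    have "l \<in> PG_lines" using u ogv_nz[OF u(1) nz3_nz2[OF nz3_inv3[OF assms]]] cls_in_PG PG_lines_eq by metis
    moreover have "card {P \<in> OG F v. incid P l} = q + 1" using card_line[OF assms u(1)] u(2) by simp
    ultimately show "l \<in> lines_of q (OG F v)" by (simp add: lines_of_def)
  qed
qed

lemma plane_OG:
  assumes "nz3 v"
  shows "is_Fq_plane q (OG F v)"
proof -
  let ?B = "OG F v"
  have sub: "?B \<subseteq> PG_points" using OG_sub nz3_nz2 assms by blast
  have two: "card {P \<in> ?B. incid P l} = q + 1" if h: "l \<in> PG_lines" "P \<in> ?B" "Q \<in> ?B" "P \<noteq> Q" "incid P l" "incid Q l" for l P Q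
  proof -
    obtain u where "u \<noteq> 0" "l = cls (ogv F u (inv3 v))" using LT[OF assms h(2-6)] by blast
    thus ?thesis using card_line[OF assms] by simp
  qed
  have A: "\<forall>l\<in>PG_lines. card {P \<in> ?B. incid P l} \<ge> 2 \<longrightarrow> card {P \<in> ?B. incid P l} = q + 1"
  proof (intro ballI impI)
    fix l assume l: "l \<in> PG_lines" "card {P \<in> ?B. incid P l} \<ge> 2"
    then obtain P Q where "P \<in> {P \<in> ?B. incid P l}" "Q \<in> {P \<in> ?B. incid P l}" "P \<noteq> Q"
      using two_elems[of "{P \<in> ?B. incid P l}"] by auto
    thus "card {P \<in> ?B. incid P l} = q + 1" using two[OF l(1)] by auto
  qed
  have Bv: "\<forall>l\<in>lines_of q ?B. \<forall>m\<in>lines_of q ?B. l \<noteq> m \<longrightarrow> (\<exists>P\<in>?B. incid P l \<and> incid P m)"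
  proof (intro ballI impI)
    fix l m assume lm: "l \<in> lines_of q ?B" "m \<in> lines_of q ?B" "l \<noteq> m"
    have iv: "nz3 (inv3 v)" using nz3_inv3[OF assms] .
    obtain u where u: "u \<noteq> 0" "l = cls (ogv F u (inv3 v))" using lm(1) lines_OG[OF assms] unfolding OG_def by blast
    obtain u' where u': "u' \<noteq> 0" "m = cls (ogv F u' (inv3 v))" using lm(2) lines_OG[OF assms] unfolding OG_def by blast
    have nu: "ogv F u (inv3 v) \<noteq> (0,0,0)" using ogv_nz[OF u(1) nz3_nz2[OF iv]] .
    have nu': "ogv F u' (inv3 v) \<noteq> (0,0,0)" using ogv_nz[OF u'(1) nz3_nz2[OF iv]] .
    let ?c = "cross (ogv F u (inv3 v)) (ogv F u' (inv3 v))"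
    have c: "?c \<noteq> (0,0,0)" using cls_eq_iff_cross[OF nu nu'] u u' lm(3) by blast
    define x where "x = F (u * F u' - F u * u')"
    define k where "k = fst (inv3 v) * fst (snd (inv3 v)) * snd (snd (inv3 v))"
    have k: "k \<noteq> 0" using iv by (cases v) (simp add: k_def)
    have cr: "?c = sc k (ogv F x v)"
      using K3[OF iv] inv3_inv3[OF assms] by (simp add: x_def k_def)
    have "x \<noteq> 0" using c cr by (auto simp: sc_def)
    hence P: "cls ?c \<in> ?B" using cr cls_sc[OF k] unfolding OG_def by auto
    have "incid (cls ?c) l" "incid (cls ?c) m"
      using incid_cls[OF c nu] incid_cls[OF c nu'] u u' dot_cross1 dot_cross2 dot3_comm by metis+
    thus "\<exists>P\<in>?B. incid P l \<and> incid P m" using P by blast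
  qed
  have C: "\<exists>P1\<in>?B. \<exists>P2\<in>?B. \<exists>P3\<in>?B. \<exists>P4\<in>?B.
        \<not> collinear3 P1 P2 P3 \<and> \<not> collinear3 P1 P2 P4 \<and>
        \<not> collinear3 P1 P3 P4 \<and> \<not> collinear3 P2 P3 P4"
  proof -
    have cB: "card ?B = q^2 + q + 1" using card_OG nz3_nz2 assms by blast
    have lt: "q + 1 < q^2 + q + 1" using q2 by (simp add: power2_eq_square)
    have "card ?B \<ge> 2" using cB q2 by simp
    then obtain P1 P2 where p12: "P1 \<in> ?B" "P2 \<in> ?B" "P1 \<noteq> P2"
      using two_elems[of ?B] finite by blast
    have line: "\<exists>l\<in>PG_lines. incid P l \<and> incid Q l \<and> card {R \<in> ?B. incid R l} = q + 1"
      if "P \<in> ?B" "Q \<in> ?B" "P \<noteq> Q" for P Q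
      using line_exists[of P Q] that sub two by blast
    obtain l12 where l12: "l12 \<in> PG_lines" "incid P1 l12" "incid P2 l12" "card {R \<in> ?B. incid R l12} = q + 1"
      using line[OF p12] by blast
    have "\<exists>P3\<in>?B. \<not> incid P3 l12"
    proof (rule ccontr)
      assume "\<not> ?thesis"
      hence "?B = {R \<in> ?B. incid R l12}" by auto
      thus False using l12(4) cB lt by simp
    qed
    then obtain P3 where p3: "P3 \<in> ?B" "\<not> incid P3 l12" by blast
    have d13: "P1 \<noteq> P3" and d23: "P2 \<noteq> P3" using p3 l12 by auto
    obtain l13 where l13: "l13 \<in> PG_lines" "incid P1 l13" "incid P3 l13" "card {R \<in> ?B. incid R l13} = q + 1"
      using line[OF p12(1) p3(1) d13] by blast
    obtain l23 where l23: "l23 \<in> PG_lines" "incid P2 l23" "incid P3 l23" "card {R \<in> ?B. incid R l23} = q + 1"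
      using line[OF p12(2) p3(1) d23] by blast
    let ?U = "({R \<in> ?B. incid R l12} - {P1}) \<union> ({R \<in> ?B. incid R l13} - {P3}) \<union> ({R \<in> ?B. incid R l23} - {P2})"
    have cU: "card ?U \<le> 3 * q"
    proof -
      have "card ?U \<le> card ({R \<in> ?B. incid R l12} - {P1}) + card ({R \<in> ?B. incid R l13} - {P3}) + card ({R \<in> ?B. incid R l23} - {P2})"
        by (meson add_le_mono card_Un_le dual_order.trans le_refl)
      also have "\<dots> = q + q + q" using l12 l13 l23 p12 p3 by (simp add: card_Diff_singleton)
      finally show ?thesis by simp
    qed
    have "3 * q < q^2 + q + 1"
    proof -
      have "(q - 1) * (q - 1) > 0" using q2 by simp
      hence "q * q + 1 > 2 * q" using q2 by (simp add: algebra_simps diff_mult_distrib diff_mult_distrib2)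
      thus ?thesis by (simp add: power2_eq_square)
    qed
    hence "\<exists>P4\<in>?B. P4 \<notin> ?U"
    proof -
      assume "3 * q < q^2 + q + 1"
      show ?thesis
      proof (rule ccontr)
        assume "\<not> ?thesis"
        hence "?B \<subseteq> ?U" by blast
        hence "card ?B \<le> card ?U" by (intro card_mono) auto
        thus False using cU cB \<open>3 * q < q^2 + q + 1\<close> by simp
      qed
    qed
    then obtain P4 where p4: "P4 \<in> ?B" "P4 \<notin> ?U" by blast
    have U1: "P1 \<in> ?U" "P2 \<in> ?U" "P3 \<in> ?U" using p12 p3 l12 l13 l23 d13 d23 by auto
    have "P4 \<noteq> P1" "P4 \<noteq> P2" "P4 \<noteq> P3" using U1 p4 by auto
    hence n12: "\<not> incid P4 l12" and n13: "\<not> incid P4 l13" and n23: "\<not> incid P4 l23"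
      using p4 by auto
    have S: "P1 \<in> PG_points" "P2 \<in> PG_points" "P3 \<in> PG_points" using sub p12 p3 by auto
    have "\<not> collinear3 P1 P2 P3" using noncol[OF S(1,2) p12(3) l12(2,3) p3(2)] .
    moreover have "\<not> collinear3 P1 P2 P4" using noncol[OF S(1,2) p12(3) l12(2,3) n12] .
    moreover have "\<not> collinear3 P1 P3 P4" using noncol[OF S(1,3) d13 l13(2,3) n13] .
    moreover have "\<not> collinear3 P2 P3 P4" using noncol[OF S(2,3) d23 l23(2,3) n23] .
    ultimately show ?thesis using p12 p3 p4 by blast
  qed
  show ?thesis unfolding is_Fq_plane_def using sub A Bv C by blast
qed

end

context frob0
begin

lemma ogv_nz0: "r \<noteq> 0 \<Longrightarrow> v \<noteq> (0,0,0) \<Longrightarrow> ogv F r v \<noteq> (0,0,0)"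
  by (cases v) auto

lemma frobv_nz: "v \<noteq> (0,0,0) \<Longrightarrow> frobv F v \<noteq> (0,0,0)"
  by (cases v) auto

lemma N_nz: "r \<noteq> 0 \<Longrightarrow> r * F r * F (F r) \<noteq> 0" by simp

lemma cross_mu:
  assumes "r \<noteq> 0" "muv F v \<noteq> (0,0,0)"
  shows "cross (frobv F (ogv F r v)) (frobv F (frobv F (ogv F r v))) \<noteq> (0,0,0)"
    and "cls (cross (frobv F (ogv F r v)) (frobv F (frobv F (ogv F r v)))) = cls (ogv F (1/r) (muv F v))"
proof -
  have o: "ogv F (1/r) (muv F v) \<noteq> (0,0,0)" using ogv_nz0 assms by simp
  show "cross (frobv F (ogv F r v)) (frobv F (frobv F (ogv F r v))) \<noteq> (0,0,0)"
    using K1[OF assms(1)] o N_nz[OF assms(1)] by (simp add: sc_zero_iff)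
  show "cls (cross (frobv F (ogv F r v)) (frobv F (frobv F (ogv F r v)))) = cls (ogv F (1/r) (muv F v))"
    using K1[OF assms(1)] cls_sc[OF N_nz[OF assms(1)]] by simp
qed

lemma mu_line_ogv:
  assumes "r \<noteq> 0" "muv F v \<noteq> (0,0,0)"
  shows "mu_line q (cls (ogv F r v)) = cls (ogv F (1/r) (muv F v))"
  unfolding mu_line_def phi_cls using meet_cls[OF cross_mu(1)[OF assms]] cross_mu(2)[OF assms] by simp

lemma mu_pt_ogv:
  assumes "r \<noteq> 0" "muv F v \<noteq> (0,0,0)"
  shows "mu_pt q (cls (ogv F r v)) = cls (ogv F (1/r) (muv F v))"
  unfolding mu_pt_def phi_cls using join_cls[OF cross_mu(1)[OF assms]] cross_mu(2)[OF assms] by simp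

lemma OG_reindex:
  assumes "\<And>r. r \<noteq> 0 \<Longrightarrow> h r \<noteq> 0" "\<And>s. s \<noteq> 0 \<Longrightarrow> \<exists>r. r \<noteq> 0 \<and> s = h r"
    "\<And>r. r \<noteq> 0 \<Longrightarrow> G (h r) = cls (ogv F r m)"
  shows "{G s | s. s \<noteq> 0} = OG F m"
proof (rule Set.set_eqI)
  fix x show "x \<in> {G s | s. s \<noteq> 0} \<longleftrightarrow> x \<in> OG F m"
  proof
    assume "x \<in> {G s | s. s \<noteq> 0}"
    then obtain s where s: "s \<noteq> 0" "x = G s" by blast
    then obtain r where "r \<noteq> 0" "s = h r" using assms(2) by blast
    thus "x \<in> OG F m" using s assms(3) unfolding OG_def by auto
  next
    assume "x \<in> OG F m"
    then obtain r where r: "r \<noteq> 0" "x = cls (ogv F r m)" unfolding OG_def by blast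
    hence "h r \<noteq> 0" "x = G (h r)" using assms(1,3) by auto
    thus "x \<in> {G s | s. s \<noteq> 0}" by blast
  qed
qed

lemma inv_reindex: "(\<And>r. r \<noteq> 0 \<Longrightarrow> G (1/r) = cls (ogv F r m)) \<Longrightarrow> {G s | s. s \<noteq> 0} = OG F m"
  by (rule OG_reindex[of "\<lambda>r. 1/r"]) (auto intro: exI[of _ "1/s" for s])

lemma mu_line_set_OG:
  assumes "nz3 v" "muv F (inv3 v) \<noteq> (0,0,0)"
  shows "mu_line_set q (OG F v) = OG F (muv F (inv3 v))"
proof -
  have "mu_line_set q (OG F v) = mu_line q ` OG F (inv3 v)"
    by (simp add: mu_line_set_def lines_OG[OF assms(1)])
  also have "\<dots> = {mu_line q (cls (ogv F s (inv3 v))) | s. s \<noteq> 0}" unfolding OG_def by blast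
  also have "\<dots> = OG F (muv F (inv3 v))"
    by (rule inv_reindex) (simp add: mu_line_ogv[OF _ assms(2)])
  finally show ?thesis .
qed

lemma mu_pt_set_OG:
  assumes "muv F v \<noteq> (0,0,0)"
  shows "mu_pt_set q (OG F v) = OG F (muv F v)"
proof -
  have "mu_pt_set q (OG F v) = {mu_pt q (cls (ogv F s v)) | s. s \<noteq> 0}"
    unfolding mu_pt_set_def OG_def by blast
  also have "\<dots> = OG F (muv F v)"
    by (rule inv_reindex) (simp add: mu_pt_ogv[OF _ assms])
  finally show ?thesis .
qed

lemma dot_ogv_inv: "r \<noteq> 0 \<Longrightarrow> dot3 (ogv F r v) (ogv F (1/r) m) = dot3 v m"
  by (cases v; cases m) (simp add: F_divide field_simps)

lemma det_ogv:
  assumes "r \<noteq> 0"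
  shows "det3 (ogv F r v) (frobv F (ogv F r v)) (frobv F (frobv F (ogv F r v)))
       = (r * F r * F (F r)) * dot3 v (muv F v)"
  unfolding det3_def K1[OF assms] dot3_sc dot_ogv_inv[OF assms] ..

lemma typeIII_pt_ogv:
  assumes "r \<noteq> 0" "v \<noteq> (0,0,0)"
  shows "typeIII_pt q (cls (ogv F r v)) \<longleftrightarrow> dot3 v (muv F v) \<noteq> 0"
proof -
  have o: "ogv F r v \<noteq> (0,0,0)" using ogv_nz0 assms by blast
  have "typeIII_pt q (cls (ogv F r v)) \<longleftrightarrow> det3 (ogv F r v) (frobv F (ogv F r v)) (frobv F (frobv F (ogv F r v))) \<noteq> 0"
    unfolding typeIII_pt_def phi_cls using collinear3_cls[OF o frobv_nz[OF o] frobv_nz[OF frobv_nz[OF o]]]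
      cls_in_PG[OF o] by simp
  thus ?thesis unfolding det_ogv[OF assms(1)] using N_nz[OF assms(1)] by simp
qed

lemma typeIII_line_ogv:
  assumes "r \<noteq> 0" "v \<noteq> (0,0,0)"
  shows "typeIII_line q (cls (ogv F r v)) \<longleftrightarrow> dot3 v (muv F v) \<noteq> 0"
proof -
  have o: "ogv F r v \<noteq> (0,0,0)" using ogv_nz0 assms by blast
  have "typeIII_line q (cls (ogv F r v)) \<longleftrightarrow> det3 (ogv F r v) (frobv F (ogv F r v)) (frobv F (frobv F (ogv F r v))) \<noteq> 0"
    unfolding typeIII_line_def phi_cls using concurrent3_cls[OF o frobv_nz[OF o] frobv_nz[OF frobv_nz[OF o]]]
      cls_in_PG[OF o] by (simp add: PG_lines_eq)
  thus ?thesis unfolding det_ogv[OF assms(1)] using N_nz[OF assms(1)] by simp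
qed

lemma typeIII_pts_OG:
  assumes "v \<noteq> (0,0,0)" "dot3 v (muv F v) \<noteq> 0"
  shows "\<forall>P\<in>OG F v. typeIII_pt q P"
  using typeIII_pt_ogv assms unfolding OG_def by blast

lemma typeIII_lines_OG:
  assumes "nz3 v" "dot3 (inv3 v) (muv F (inv3 v)) \<noteq> 0"
  shows "\<forall>l\<in>lines_of q (OG F v). typeIII_line q l"
proof -
  have "inv3 v \<noteq> (0,0,0)" using nz2_nz[OF nz3_nz2[OF nz3_inv3[OF assms(1)]]] .
  thus ?thesis unfolding lines_OG[OF assms(1)] using typeIII_line_ogv assms(2) unfolding OG_def by blast
qed

lemma muv_frobv: "muv F (frobv F v) = frobv F (muv F v)"
  by (cases v) (simp add: Fs)
lemma dot_frobv: "dot3 (frobv F v) (frobv F w) = F (dot3 v w)"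
  by (cases v; cases w) (simp add: Fs algebra_simps)
lemma inv3_frobv: "inv3 (frobv F v) = frobv F (inv3 v)"
  by (cases v) (simp add: Fs)
lemma nz3_frobv: "nz3 (frobv F v) = nz3 v"
  by (cases v) auto

end

context frob0
begin

lemma join_Tphi2_T: "Defs.join ptTphi2 ptT = cls (1,0,0)"
proof -
  have "cross (0,1,0) (0,0,1) = ((1,0,0)::'a tri)" by simp
  thus ?thesis unfolding ptTphi2_def ptT_def using join_cls[of "(0,1,0)" "(0,0,1)"] by simp
qed

lemma join_T_Tphi: "Defs.join ptT ptTphi = cls (0,1,0)"
proof -
  have "cross (0,0,1) (1,0,0) = ((0,1,0)::'a tri)" by simp
  thus ?thesis unfolding ptTphi_def ptT_def using join_cls[of "(0,0,1)" "(1,0,0)"] by simp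
qed

lemma OG_in_orb: "v \<noteq> (0,0,0) \<Longrightarrow> OG F v \<in> orb_ST q"
  unfolding orb_ST_def using orbit_ST_cls cls_in_PG by blast

lemma sls_x0:
  assumes "b \<noteq> 0" "c \<noteq> 0"
  shows "sls_on q (cls (1,0,0)) (OG F (0,b,c))"
proof -
  have "\<forall>P\<in>OG F (0,b,c). incid P (cls (1,0,0))"
  proof
    fix P assume "P \<in> OG F (0,b,c)"
    then obtain r where r: "r \<noteq> 0" "P = cls (ogv F r (0,b,c))" unfolding OG_def by blast
    have o: "ogv F r (0,b,c) \<noteq> (0,0,0)" using r(1) assms by simp
    show "incid P (cls (1,0,0))" using r incid_cls[OF o, of "(1,0,0)"] by simp
  qed
  moreover have "card (OG F (0,b,c)) = q^2+q+1" using card_OG assms by simp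
  moreover have "OG F (0,b,c) \<in> orb_ST q" using OG_in_orb assms by simp
  ultimately show ?thesis unfolding sls_on_def by blast
qed

lemma sls_y0:
  assumes "a \<noteq> 0" "c \<noteq> 0"
  shows "sls_on q (cls (0,1,0)) (OG F (a,0,c))"
proof -
  have "\<forall>P\<in>OG F (a,0,c). incid P (cls (0,1,0))"
  proof
    fix P assume "P \<in> OG F (a,0,c)"
    then obtain r where r: "r \<noteq> 0" "P = cls (ogv F r (a,0,c))" unfolding OG_def by blast
    have o: "ogv F r (a,0,c) \<noteq> (0,0,0)" using r(1) assms by simp
    show "incid P (cls (0,1,0))" using r incid_cls[OF o, of "(0,1,0)"] by simp
  qed
  moreover have "card (OG F (a,0,c)) = q^2+q+1" using card_OG assms by simp
  moreover have "OG F (a,0,c) \<in> orb_ST q" using OG_in_orb assms by simp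
  ultimately show ?thesis unfolding sls_on_def by blast
qed

lemma pencil_OG: "pencil X (OG F w) = {Defs.join X (cls (ogv F s w)) | s. s \<noteq> 0}"
  unfolding pencil_def OG_def by blast

lemma PEN1:
  assumes "b \<noteq> 0" "c \<noteq> 0"
  shows "pencil ptTphi (OG F (0,c,-b)) = OG F (0,b,c)"
  unfolding pencil_OG
proof (rule inv_reindex)
  fix r :: 'a assume r: "r \<noteq> 0"
  have cr: "cross (1,0,0) (ogv F (1/r) (0,c,-b)) = (0, F (F (1/r)) * b, F (1/r) * c)" by simp
  have nz: "cross (1,0,0) (ogv F (1/r) (0,c,-b)) \<noteq> (0,0,0)" using cr r assms by (simp add: F_divide)
  have eq: "ogv F r (0,b,c) = sc (F r * F (F r)) (0, F (F (1/r)) * b, F (1/r) * c)"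
    using r by (simp add: F_divide F3)
  have "cls (ogv F r (0,b,c)) = cls (0, F (F (1/r)) * b, F (1/r) * c)"
    unfolding eq by (rule cls_sc) (use r in simp)
  hence "cls (0, F (F (1/r)) * b, F (1/r) * c) = cls (ogv F r (0,b,c))" by simp
  thus "Defs.join ptTphi (cls (ogv F (1/r) (0,c,-b))) = cls (ogv F r (0,b,c))"
    unfolding ptTphi_def using join_cls[OF nz] cr by simp
qed

lemma PEN2:
  assumes "a \<noteq> 0" "c \<noteq> 0"
  shows "pencil ptTphi2 (OG F (-c,0,a)) = OG F (a,0,c)"
  unfolding pencil_OG
proof (rule inv_reindex)
  fix r :: 'a assume r: "r \<noteq> 0"
  have cr: "cross (0,1,0) (ogv F (1/r) (-c,0,a)) = (F (F (1/r)) * a, 0, (1/r) * c)" by simp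
  have nz: "cross (0,1,0) (ogv F (1/r) (-c,0,a)) \<noteq> (0,0,0)" using cr r assms by (simp add: F_divide)
  have eq: "ogv F r (a,0,c) = sc (r * F (F r)) (F (F (1/r)) * a, 0, (1/r) * c)"
    using r by (simp add: F_divide F3)
  have "cls (ogv F r (a,0,c)) = cls (F (F (1/r)) * a, 0, (1/r) * c)"
    unfolding eq by (rule cls_sc) (use r in simp)
  hence "cls (F (F (1/r)) * a, 0, (1/r) * c) = cls (ogv F r (a,0,c))" by simp
  thus "Defs.join ptTphi2 (cls (ogv F (1/r) (-c,0,a))) = cls (ogv F r (a,0,c))"
    unfolding ptTphi2_def using join_cls[OF nz] cr by simp
qed

lemma ogv_ogv: "ogv F r (ogv F t v) = ogv F (r * t) v"
  by (cases v) (simp add: F_mult mult_ac)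

lemma OG_scale:
  assumes "k \<noteq> 0" "t \<noteq> 0"
  shows "OG F (sc k (ogv F t v)) = OG F v"
proof -
  have "OG F (sc k (ogv F t v)) = {cls (ogv F s (sc k (ogv F t v))) | s. s \<noteq> 0}" unfolding OG_def ..
  also have "\<dots> = OG F v"
  proof (rule OG_reindex[of "\<lambda>r. r / t"])
    show "\<And>r. r \<noteq> 0 \<Longrightarrow> r / t \<noteq> 0" using assms by simp
    show "\<And>s. s \<noteq> 0 \<Longrightarrow> \<exists>r. r \<noteq> 0 \<and> s = r / t" using assms
      by (intro exI[of _ "s * t" for s]) auto
    fix r :: 'a assume "r \<noteq> 0"
    have "ogv F (r / t) (sc k (ogv F t v)) = sc k (ogv F r v)"
      using assms by (simp add: ogv_sc ogv_ogv)
    thus "cls (ogv F (r / t) (sc k (ogv F t v))) = cls (ogv F r v)" using cls_sc[OF assms(1)] by simp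
  qed
  finally show ?thesis .
qed

lemma OG_scale1: "k \<noteq> 0 \<Longrightarrow> OG F (sc k v) = OG F v"
  using OG_scale[of k 1 v] by (cases v) simp

lemma TP1:
  assumes "nz3 (a,b,c)" "F c * F (F c) = F a * F (F b)"
  shows "OG F (a,b,c) = Pi_theta q (c/b)"
proof -
  have "F (F (F c * F (F c))) = F (F (F a * F (F b)))" using assms(2) by simp
  hence e: "c * F c = a * F b" by (simp add: F_mult F3)
  have eqv: "(a,b,c) = sc b (c/b * F (c/b), 1, c/b)" using assms(1) e
    by (simp add: F_divide field_simps)
  have "OG F (a,b,c) = OG F (c/b * F (c/b), 1, c/b)"
    by (subst eqv) (rule OG_scale1, use assms(1) in simp)
  thus ?thesis unfolding Pi_theta_OG .
qed

lemma TP2: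
  assumes "nz3 (a,b,c)" "F a * F (F a) = F b * F (F c)"
  shows "OG F (a,b,c) = phi q ` Pi_theta q (F (F (a/c)))"
proof -
  have "F (F (F a * F (F a))) = F (F (F b * F (F c)))" using assms(2) by simp
  hence e: "a * F a = b * F c" by (simp add: F_mult F3)
  have eqv: "(a,b,c) = sc c (frobv F (F (F (a/c)) * F (F (F (a/c))), 1, F (F (a/c))))" using assms(1) e
    by (simp add: F_divide F_mult F3 field_simps)
  have "OG F (a,b,c) = OG F (frobv F (F (F (a/c)) * F (F (F (a/c))), 1, F (F (a/c))))"
    by (subst eqv) (rule OG_scale1, use assms(1) in simp)
  thus ?thesis unfolding Pi_theta_OG phi_OG .
qed

lemma TP3:
  assumes "nz3 (a,b,c)" "F b * F (F b) = F c * F (F a)"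
  shows "OG F (a,b,c) = phi q ` phi q ` Pi_theta q (F (b/a))"
proof -
  have "F (F (F b * F (F b))) = F (F (F c * F (F a)))" using assms(2) by simp
  hence e: "b * F b = c * F a" by (simp add: F_mult F3)
  have eqv: "(a,b,c) = sc a (frobv F (frobv F (F (b/a) * F (F (b/a)), 1, F (b/a))))" using assms(1) e
    by (simp add: F_divide F_mult F3 field_simps)
  have "OG F (a,b,c) = OG F (frobv F (frobv F (F (b/a) * F (F (b/a)), 1, F (b/a))))"
    by (subst eqv) (rule OG_scale1, use assms(1) in simp)
  thus ?thesis unfolding Pi_theta_OG phi_OG .
qed

end

lemma inv_diff_nz: "(x::'a::field) \<noteq> 0 \<Longrightarrow> y \<noteq> 0 \<Longrightarrow> x \<noteq> y \<Longrightarrow> 1/x - 1/y \<noteq> 0"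
  by (simp add: field_simps)

context frob0
begin

lemma Norm_eq: "Norm q \<theta> = \<theta> * F \<theta> * F (F \<theta>)"
  by (simp add: Norm_def power_add F_def[symmetric] FF_pow[symmetric] mult_ac)

lemma muv_nz3_inv:
  assumes "nz3 v" "nz3 (muv F v)"
  shows "nz3 (muv F (inv3 v))"
proof -
  obtain a b c where v: "v = (a,b,c)" by (cases v)
  have nz: "a \<noteq> 0" "b \<noteq> 0" "c \<noteq> 0" using assms(1) v by auto
  have h: "F a * F (F a) \<noteq> F b * F (F c)" "F b * F (F b) \<noteq> F c * F (F a)" "F c * F (F c) \<noteq> F a * F (F b)"
    using assms(2) v by auto
  show ?thesis unfolding v using h nz
    by (simp add: F_divide F_inverse inv_diff_nz del: divide_const_simps)
qed

lemma coll_all: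
  assumes "l \<in> PG_lines" "\<forall>P\<in>B. incid P l"
  shows "\<forall>P1\<in>B. \<forall>P2\<in>B. \<forall>P3\<in>B. collinear3 P1 P2 P3"
  using assms unfolding collinear3_def by blast

lemma plane_nz3:
  assumes "v \<noteq> (0,0,0)" "is_Fq_plane q (OG F v)"
  shows "nz3 v"
proof (rule ccontr)
  assume nn: "\<not> nz3 v"
  obtain a b c where v: "v = (a,b,c)" by (cases v)
  have "\<exists>e. e \<noteq> (0,0,0) \<and> dot3 v e = 0 \<and> (\<forall>r. dot3 (ogv F r v) e = 0)"
  proof (cases "a = 0")
    case True thus ?thesis using v by (intro exI[of _ "(1,0,0)"]) simp
  next
    case a: False
    show ?thesis
    proof (cases "b = 0")
      case True thus ?thesis using v by (intro exI[of _ "(0,1,0)"]) simp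
    next
      case False
      hence "c = 0" using nn a v by simp
      thus ?thesis using v by (intro exI[of _ "(0,0,1)"]) simp
    qed
  qed
  then obtain e where e: "e \<noteq> (0,0,0)" "\<forall>r. dot3 (ogv F r v) e = 0" by blast
  have "\<forall>P\<in>OG F v. incid P (cls e)"
  proof
    fix P assume "P \<in> OG F v"
    then obtain r where r: "r \<noteq> 0" "P = cls (ogv F r v)" unfolding OG_def by blast
    show "incid P (cls e)" using incid_cls[OF ogv_nz0[OF r(1) assms(1)] e(1)] e(2) r(2) by simp
  qed
  moreover have "cls e \<in> PG_lines" using cls_in_PG[OF e(1)] by (simp add: PG_lines_eq)
  ultimately have all: "\<forall>P1\<in>OG F v. \<forall>P2\<in>OG F v. \<forall>P3\<in>OG F v. collinear3 P1 P2 P3"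
    using coll_all by blast
  have "\<exists>P1\<in>OG F v. \<exists>P2\<in>OG F v. \<exists>P3\<in>OG F v. \<exists>P4\<in>OG F v.
        \<not> collinear3 P1 P2 P3 \<and> \<not> collinear3 P1 P2 P4 \<and>
        \<not> collinear3 P1 P3 P4 \<and> \<not> collinear3 P2 P3 P4"
    using assms(2) unfolding is_Fq_plane_def by (elim conjE)
  then obtain P1 P2 P3 where "P1 \<in> OG F v" "P2 \<in> OG F v" "P3 \<in> OG F v" "\<not> collinear3 P1 P2 P3"
    by blast
  thus False using all by blast
qed

lemma orb_OG:
  fixes B :: "'a tri set set"
  assumes "B \<in> orb_ST q"
  shows "\<exists>v. v \<noteq> (0,0,0) \<and> B = OG F v"
proof -
  obtain P where P: "P \<in> PG_points" "B = orbit_ST q P" using assms unfolding orb_ST_def by blast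
  then obtain v where "v \<noteq> (0,0,0)" "P = cls v" unfolding PG_points_iff by blast
  thus ?thesis using P orbit_ST_cls by blast
qed

lemma not_T_nz3:
  assumes "nz3 v" "\<not> T_plane q (OG F v)" "\<not> Tphi_plane q (OG F v)" "\<not> Tphi2_plane q (OG F v)"
  shows "nz3 (muv F v)"
proof -
  obtain a b c where v: "v = (a,b,c)" by (cases v)
  have nz: "a \<noteq> 0" "b \<noteq> 0" "c \<noteq> 0" using assms(1) v by auto
  have 1: "F c * F (F c) \<noteq> F a * F (F b)"
  proof
    assume "F c * F (F c) = F a * F (F b)"
    hence "OG F v = Pi_theta q (c/b)" using TP1 assms(1) v by simp
    moreover have "c / b \<noteq> 0" using nz by simp
    ultimately show False using assms(2) unfolding T_plane_def by blast
  qed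
  have 2: "F a * F (F a) \<noteq> F b * F (F c)"
  proof
    assume "F a * F (F a) = F b * F (F c)"
    hence "OG F v = phi q ` Pi_theta q (F (F (a/c)))" using TP2 assms(1) v by simp
    moreover have "F (F (a/c)) \<noteq> 0" using nz by simp
    ultimately show False using assms(3) unfolding Tphi_plane_def by blast
  qed
  have 3: "F b * F (F b) \<noteq> F c * F (F a)"
  proof
    assume "F b * F (F b) = F c * F (F a)"
    hence "OG F v = phi q ` phi q ` Pi_theta q (F (b/a))" using TP3 assms(1) v by simp
    moreover have "F (b/a) \<noteq> 0" using nz by simp
    ultimately show False using assms(4) unfolding Tphi2_plane_def by blast
  qed
  show ?thesis using 1 2 3 v by simp
qed

lemma part4:
  fixes B :: "'a tri set set"
  assumes "B \<in> orb_ST q" "is_Fq_plane q B"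
    "\<not> T_plane q B" "\<not> Tphi_plane q B" "\<not> Tphi2_plane q B"
  shows "mu_line_set q B \<in> orb_ST q \<and> is_Fq_plane q (mu_line_set q B)"
proof -
  obtain v where v: "v \<noteq> (0,0,0)" "B = OG F v" using orb_OG[OF assms(1)] by blast
  have n3: "nz3 v" using plane_nz3 v assms(2) by simp
  have m: "nz3 (muv F v)" using not_T_nz3[OF n3] assms(3-5) v by simp
  have mi: "nz3 (muv F (inv3 v))" using muv_nz3_inv[OF n3 m] .
  have e: "mu_line_set q B = OG F (muv F (inv3 v))"
    using mu_line_set_OG[OF n3 nz2_nz[OF nz3_nz2[OF mi]]] v by simp
  show ?thesis unfolding e using OG_in_orb[OF nz2_nz[OF nz3_nz2[OF mi]]] plane_OG[OF mi] by simp
qed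

lemma part5:
  fixes B :: "'a tri set set"
  assumes "B \<in> orb_ST q" "is_Fq_plane q B"
    "\<not> T_plane q B" "\<not> Tphi_plane q B" "\<not> Tphi2_plane q B"
  shows "\<exists>C. C \<in> orb_ST q \<and> is_Fq_plane q C \<and> mu_pt_set q B = lines_of q C"
proof -
  obtain v where v: "v \<noteq> (0,0,0)" "B = OG F v" using orb_OG[OF assms(1)] by blast
  have n3: "nz3 v" using plane_nz3 v assms(2) by simp
  have m: "nz3 (muv F v)" using not_T_nz3[OF n3] assms(3-5) v by simp
  have mi: "nz3 (inv3 (muv F v))" using nz3_inv3[OF m] .
  have e: "mu_pt_set q B = OG F (muv F v)"
    using mu_pt_set_OG[OF nz2_nz[OF nz3_nz2[OF m]]] v by simp
  have "lines_of q (OG F (inv3 (muv F v))) = OG F (muv F v)"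
    using lines_OG[OF mi] inv3_inv3[OF m] by simp
  thus ?thesis using e OG_in_orb[OF nz2_nz[OF nz3_nz2[OF mi]]] plane_OG[OF mi] by metis
qed

end

context frob0
begin

lemma PEN0:
  assumes "\<theta> \<noteq> 0" "N = \<theta> * F \<theta> * F (F \<theta>)" "N \<noteq> 1"
  shows "pencil ptT (OG F (1/\<theta>, 1, 0)) = OG F (F (F \<theta>) * (N - 1), 1 - N, 0)"
  unfolding pencil_OG
proof (rule OG_reindex[of "\<lambda>r. \<theta> * F \<theta> / r"])
  show "\<And>r. r \<noteq> 0 \<Longrightarrow> \<theta> * F \<theta> / r \<noteq> 0" using assms by simp
  show "\<And>s. s \<noteq> 0 \<Longrightarrow> \<exists>r. r \<noteq> 0 \<and> s = \<theta> * F \<theta> / r" using assms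
    by (intro exI[of _ "\<theta> * F \<theta> / s" for s]) auto
  fix r :: 'a assume r: "r \<noteq> 0"
  define s where "s = \<theta> * F \<theta> / r"
  have s0: "s \<noteq> 0" using r assms by (simp add: s_def)
  have cr: "cross (0,0,1) (ogv F s (1/\<theta>, 1, 0)) = (- F s, s / \<theta>, 0)" by simp
  have nz: "cross (0,0,1) (ogv F s (1/\<theta>, 1, 0)) \<noteq> (0,0,0)" using cr s0 assms(1) by simp
  have k: "- r * F r * (N - 1) / F \<theta> \<noteq> 0" using r assms by simp
  have eq: "ogv F r (F (F \<theta>) * (N - 1), 1 - N, 0) = sc (- r * F r * (N - 1) / F \<theta>) (- F s, s / \<theta>, 0)"
    using r assms(1) by (simp add: s_def assms(2) F_divide F_mult F3 field_simps)
  have "cls (ogv F r (F (F \<theta>) * (N - 1), 1 - N, 0)) = cls (- F s, s / \<theta>, 0)"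
    unfolding eq by (rule cls_sc[OF k])
  thus "Defs.join ptT (cls (ogv F (\<theta> * F \<theta> / r) (1/\<theta>, 1, 0))) = cls (ogv F r (F (F \<theta>) * (N - 1), 1 - N, 0))"
    unfolding ptT_def s_def[symmetric] using join_cls[OF nz] cr by simp
qed

lemma pi_facts:
  assumes "\<theta> \<noteq> 0" "N = \<theta> * F \<theta> * F (F \<theta>)" "N \<noteq> 1"
  shows "muv F (\<theta> * F \<theta>, 1, \<theta>) = (F (F \<theta>) * (N - 1), 1 - N, 0)"
    and "muv F (inv3 (\<theta> * F \<theta>, 1, \<theta>)) = ((1 - N) / (N * F (F \<theta>)), (N - 1) / N, 0)"
    and "dot3 (\<theta> * F \<theta>, 1, \<theta>) (muv F (\<theta> * F \<theta>, 1, \<theta>)) \<noteq> 0"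
    and "dot3 (inv3 (\<theta> * F \<theta>, 1, \<theta>)) (muv F (inv3 (\<theta> * F \<theta>, 1, \<theta>))) \<noteq> 0"
proof -
  have N0: "N \<noteq> 0" using assms by simp
  show m: "muv F (\<theta> * F \<theta>, 1, \<theta>) = (F (F \<theta>) * (N - 1), 1 - N, 0)"
    using assms by (simp add: F_mult F3 algebra_simps)
  show mi: "muv F (inv3 (\<theta> * F \<theta>, 1, \<theta>)) = ((1 - N) / (N * F (F \<theta>)), (N - 1) / N, 0)"
    using assms by (simp add: F_divide F_mult F3 field_simps)
  have "dot3 (\<theta> * F \<theta>, 1, \<theta>) (muv F (\<theta> * F \<theta>, 1, \<theta>)) = (N - 1) * (N - 1)"
    unfolding m using assms by (simp add: algebra_simps)
  thus "dot3 (\<theta> * F \<theta>, 1, \<theta>) (muv F (\<theta> * F \<theta>, 1, \<theta>)) \<noteq> 0" using assms by simp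
  have "dot3 (inv3 (\<theta> * F \<theta>, 1, \<theta>)) (muv F (inv3 (\<theta> * F \<theta>, 1, \<theta>))) = (N - 1) * (N - 1) / (N * N)"
    unfolding mi using assms N0 by (simp add: field_simps)
  thus "dot3 (inv3 (\<theta> * F \<theta>, 1, \<theta>)) (muv F (inv3 (\<theta> * F \<theta>, 1, \<theta>))) \<noteq> 0" using assms N0 by simp
qed

end

context frob0
begin

lemma part123:
  fixes \<theta> :: 'a
  assumes th: "\<theta> \<noteq> 0" and Nn: "Norm q \<theta> \<noteq> 1"
  shows "((\<forall>P\<in>Pi_theta q \<theta>. typeIII_pt q P) \<and>
        (\<forall>l\<in>lines_of q (Pi_theta q \<theta>). typeIII_line q l) \<and>
        mu_line_set q (Pi_theta q \<theta>) = S_theta q (- 1 / \<theta>) \<and>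
        mu_pt_set q (Pi_theta q \<theta>) = pencil ptT (S_theta q (1 / \<theta>)))
   \<and> ((\<forall>P\<in>phi q ` Pi_theta q \<theta>. typeIII_pt q P) \<and>
        (\<forall>l\<in>lines_of q (phi q ` Pi_theta q \<theta>). typeIII_line q l) \<and>
        Tphi_sls q (mu_line_set q (phi q ` Pi_theta q \<theta>)) \<and>
        (\<exists>S. Tphi_sls q S \<and> mu_pt_set q (phi q ` Pi_theta q \<theta>) = pencil ptTphi S))
   \<and> ((\<forall>P\<in>phi q ` phi q ` Pi_theta q \<theta>. typeIII_pt q P) \<and>
        (\<forall>l\<in>lines_of q (phi q ` phi q ` Pi_theta q \<theta>). typeIII_line q l) \<and>
        Tphi2_sls q (mu_line_set q (phi q ` phi q ` Pi_theta q \<theta>)) \<and>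
        (\<exists>S. Tphi2_sls q S \<and> mu_pt_set q (phi q ` phi q ` Pi_theta q \<theta>) = pencil ptTphi2 S))"
proof -
  define N where "N = \<theta> * F \<theta> * F (F \<theta>)"
  have N1: "N \<noteq> 1" using Nn Norm_eq N_def by simp
  have N0: "N \<noteq> 0" using th N_def by simp
  define v0 :: "'a tri" where "v0 = (\<theta> * F \<theta>, 1, \<theta>)"
  have nv0: "nz3 v0" using th by (simp add: v0_def)
  have v0nz: "v0 \<noteq> (0,0,0)" by (simp add: v0_def)
  have Pi: "Pi_theta q \<theta> = OG F v0" unfolding v0_def by (rule Pi_theta_OG)
  note pf = pi_facts[OF th N_def N1, folded v0_def]
  define al where "al = (1 - N) / (N * F (F \<theta>))"
  define be where "be = (N - 1) / N"
  define al' where "al' = F (F \<theta>) * (N - 1)"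
  define be' where "be' = 1 - N"
  have nz: "al \<noteq> 0" "be \<noteq> 0" "al' \<noteq> 0" "be' \<noteq> 0" using N0 N1 th
    by (simp_all add: al_def be_def al'_def be'_def)
  have mw: "muv F (inv3 v0) = (al, be, 0)" using pf(2) by (simp add: al_def be_def)
  have mv: "muv F v0 = (al', be', 0)" using pf(1) by (simp add: al'_def be'_def)
  have Dv: "dot3 v0 (muv F v0) \<noteq> 0" using pf(3) .
  have Dw: "dot3 (inv3 v0) (muv F (inv3 v0)) \<noteq> 0" using pf(4) .
  have mwnz: "muv F (inv3 v0) \<noteq> (0,0,0)" using mw nz by simp
  have mvnz: "muv F v0 \<noteq> (0,0,0)" using mv nz by simp
  have p1a: "\<forall>P\<in>Pi_theta q \<theta>. typeIII_pt q P" unfolding Pi using typeIII_pts_OG[OF v0nz Dv] .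
  have p1b: "\<forall>l\<in>lines_of q (Pi_theta q \<theta>). typeIII_line q l" unfolding Pi using typeIII_lines_OG[OF nv0 Dw] .
  have p1c: "mu_line_set q (Pi_theta q \<theta>) = S_theta q (- 1 / \<theta>)"
  proof -
    have k: "(N - 1) / (N * F \<theta> * F (F \<theta>)) \<noteq> 0" using N0 N1 th by simp
    have t: "\<theta> * F \<theta> \<noteq> 0" using th by simp
    have eq: "(al, be, 0) = sc ((N - 1) / (N * F \<theta> * F (F \<theta>))) (ogv F (\<theta> * F \<theta>) (- 1 / \<theta>, 1, 0))"
      using th N0 by (simp add: al_def be_def F_mult field_simps)
    have "OG F (al, be, 0) = OG F (- 1 / \<theta>, 1, 0)" unfolding eq by (rule OG_scale[OF k t])
    thus ?thesis unfolding Pi mu_line_set_OG[OF nv0 mwnz] mw S_theta_OG .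
  qed
  have p1d: "mu_pt_set q (Pi_theta q \<theta>) = pencil ptT (S_theta q (1 / \<theta>))"
    unfolding Pi mu_pt_set_OG[OF mvnz] mv S_theta_OG PEN0[OF th N_def N1]
    by (simp add: al'_def be'_def)
  have Pi2: "phi q ` Pi_theta q \<theta> = OG F (frobv F v0)" unfolding Pi phi_OG ..
  have nv1: "nz3 (frobv F v0)" using nv0 nz3_frobv by simp
  have v1nz: "frobv F v0 \<noteq> (0,0,0)" using frobv_nz[OF v0nz] .
  have Dv1: "dot3 (frobv F v0) (muv F (frobv F v0)) \<noteq> 0" using Dv by (simp add: muv_frobv dot_frobv)
  have Dw1: "dot3 (inv3 (frobv F v0)) (muv F (inv3 (frobv F v0))) \<noteq> 0"
    using Dw by (simp add: inv3_frobv muv_frobv dot_frobv)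
  have mw1: "muv F (inv3 (frobv F v0)) = (0, F al, F be)" by (simp add: inv3_frobv muv_frobv mw)
  have mv1: "muv F (frobv F v0) = (0, F al', F be')" by (simp add: muv_frobv mv)
  have p2a: "\<forall>P\<in>phi q ` Pi_theta q \<theta>. typeIII_pt q P" unfolding Pi2 using typeIII_pts_OG[OF v1nz Dv1] .
  have p2b: "\<forall>l\<in>lines_of q (phi q ` Pi_theta q \<theta>). typeIII_line q l" unfolding Pi2 using typeIII_lines_OG[OF nv1 Dw1] .
  have p2c: "Tphi_sls q (mu_line_set q (phi q ` Pi_theta q \<theta>))"
  proof -
    have h: "muv F (inv3 (frobv F v0)) \<noteq> (0,0,0)" using mw1 nz by simp
    show ?thesis unfolding Pi2 Tphi_sls_def join_Tphi2_T mu_line_set_OG[OF nv1 h] mw1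
      using sls_x0 nz by simp
  qed
  have p2d: "\<exists>S. Tphi_sls q S \<and> mu_pt_set q (phi q ` Pi_theta q \<theta>) = pencil ptTphi S"
  proof (intro exI conjI)
    show "Tphi_sls q (OG F (0, F be', - F al'))" unfolding Tphi_sls_def join_Tphi2_T
      using sls_x0 nz by simp
    have "muv F (frobv F v0) \<noteq> (0,0,0)" using mv1 nz by simp
    thus "mu_pt_set q (phi q ` Pi_theta q \<theta>) = pencil ptTphi (OG F (0, F be', - F al'))"
      unfolding Pi2 mu_pt_set_OG[OF \<open>muv F (frobv F v0) \<noteq> (0,0,0)\<close>] mv1
      using PEN1[of "F al'" "F be'"] nz by simp
  qed
  have Pi3: "phi q ` phi q ` Pi_theta q \<theta> = OG F (frobv F (frobv F v0))" unfolding Pi phi_OG ..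
  have nv2: "nz3 (frobv F (frobv F v0))" using nv0 nz3_frobv by simp
  have v2nz: "frobv F (frobv F v0) \<noteq> (0,0,0)" using frobv_nz[OF v1nz] .
  have Dv2: "dot3 (frobv F (frobv F v0)) (muv F (frobv F (frobv F v0))) \<noteq> 0" using Dv by (simp add: muv_frobv dot_frobv)
  have Dw2: "dot3 (inv3 (frobv F (frobv F v0))) (muv F (inv3 (frobv F (frobv F v0)))) \<noteq> 0"
    using Dw by (simp add: inv3_frobv muv_frobv dot_frobv)
  have mw2: "muv F (inv3 (frobv F (frobv F v0))) = (F (F be), 0, F (F al))" by (simp add: inv3_frobv muv_frobv mw)
  have mv2: "muv F (frobv F (frobv F v0)) = (F (F be'), 0, F (F al'))" by (simp add: muv_frobv mv)
  have p3a: "\<forall>P\<in>phi q ` phi q ` Pi_theta q \<theta>. typeIII_pt q P" unfolding Pi3 using typeIII_pts_OG[OF v2nz Dv2] .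
  have p3b: "\<forall>l\<in>lines_of q (phi q ` phi q ` Pi_theta q \<theta>). typeIII_line q l" unfolding Pi3 using typeIII_lines_OG[OF nv2 Dw2] .
  have p3c: "Tphi2_sls q (mu_line_set q (phi q ` phi q ` Pi_theta q \<theta>))"
  proof -
    have h: "muv F (inv3 (frobv F (frobv F v0))) \<noteq> (0,0,0)" using mw2 nz by simp
    show ?thesis unfolding Pi3 Tphi2_sls_def join_T_Tphi mu_line_set_OG[OF nv2 h] mw2
      using sls_y0 nz by simp
  qed
  have p3d: "\<exists>S. Tphi2_sls q S \<and> mu_pt_set q (phi q ` phi q ` Pi_theta q \<theta>) = pencil ptTphi2 S"
  proof (intro exI conjI)
    show "Tphi2_sls q (OG F (- F (F al'), 0, F (F be')))" unfolding Tphi2_sls_def join_T_Tphi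
      using sls_y0 nz by simp
    have "muv F (frobv F (frobv F v0)) \<noteq> (0,0,0)" using mv2 nz by simp
    thus "mu_pt_set q (phi q ` phi q ` Pi_theta q \<theta>) = pencil ptTphi2 (OG F (- F (F al'), 0, F (F be')))"
      unfolding Pi3 mu_pt_set_OG[OF \<open>muv F (frobv F (frobv F v0)) \<noteq> (0,0,0)\<close>] mv2
      using PEN2[of "F (F be')" "F (F al')"] nz by simp
  qed
  show ?thesis using p1a p1b p1c p1d p2a p2b p2c p2d p3a p3b p3c p3d by blast
qed

end

theorem lemma4p1:
  fixes q :: nat
  assumes "prime_power q"
    and "CARD('a::{finite,field}) = q ^ 3"
  shows
   "(\<forall>\<theta>::'a. \<theta> \<noteq> 0 \<and> Norm q \<theta> \<noteq> 1 \<longrightarrow>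
        (\<forall>P\<in>Pi_theta q \<theta>. typeIII_pt q P) \<and>
        (\<forall>l\<in>lines_of q (Pi_theta q \<theta>). typeIII_line q l) \<and>
        mu_line_set q (Pi_theta q \<theta>) = S_theta q (- 1 / \<theta>) \<and>
        mu_pt_set q (Pi_theta q \<theta>) = pencil ptT (S_theta q (1 / \<theta>)))
  \<and> (\<forall>\<theta>::'a. \<theta> \<noteq> 0 \<and> Norm q \<theta> \<noteq> 1 \<longrightarrow>
        (\<forall>P\<in>phi q ` Pi_theta q \<theta>. typeIII_pt q P) \<and>
        (\<forall>l\<in>lines_of q (phi q ` Pi_theta q \<theta>). typeIII_line q l) \<and>
        Tphi_sls q (mu_line_set q (phi q ` Pi_theta q \<theta>)) \<and>
        (\<exists>S. Tphi_sls q S \<and> mu_pt_set q (phi q ` Pi_theta q \<theta>) = pencil ptTphi S))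
  \<and> (\<forall>\<theta>::'a. \<theta> \<noteq> 0 \<and> Norm q \<theta> \<noteq> 1 \<longrightarrow>
        (\<forall>P\<in>phi q ` phi q ` Pi_theta q \<theta>. typeIII_pt q P) \<and>
        (\<forall>l\<in>lines_of q (phi q ` phi q ` Pi_theta q \<theta>). typeIII_line q l) \<and>
        Tphi2_sls q (mu_line_set q (phi q ` phi q ` Pi_theta q \<theta>)) \<and>
        (\<exists>S. Tphi2_sls q S \<and> mu_pt_set q (phi q ` phi q ` Pi_theta q \<theta>) = pencil ptTphi2 S))
  \<and> (\<forall>B::'a tri set set. B \<in> orb_ST q \<and> is_Fq_plane q B \<and>
        (\<forall>l\<in>lines_of q B. typeIII_line q l) \<and>
        \<not> T_plane q B \<and> \<not> Tphi_plane q B \<and> \<not> Tphi2_plane q B \<longrightarrow>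
        mu_line_set q B \<in> orb_ST q \<and> is_Fq_plane q (mu_line_set q B))
  \<and> (\<forall>B::'a tri set set. B \<in> orb_ST q \<and> is_Fq_plane q B \<and>
        (\<forall>P\<in>B. typeIII_pt q P) \<and>
        \<not> T_plane q B \<and> \<not> Tphi_plane q B \<and> \<not> Tphi2_plane q B \<longrightarrow>
        (\<exists>C. C \<in> orb_ST q \<and> is_Fq_plane q C \<and> mu_pt_set q B = lines_of q C))"
proof -
  obtain p k where pk: "prime p" "k \<ge> 1" "q = p ^ k" using assms(1) unfolding prime_power_def by blast
  have p2: "p \<ge> 2" using pk(1) prime_ge_2_nat by blast
  have "p \<le> p ^ k" using pk(2) p2 by (simp add: self_le_power)
  hence q2: "q \<ge> 2" using pk(3) p2 by simp
  have Fadd: "\<And>x y::'a. (x + y) ^ q = x ^ q + y ^ q" using char_freshman[OF assms] .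
  have F3: "(((x::'a) ^ q) ^ q) ^ q = x" for x
  proof -
    have "((x ^ q) ^ q) ^ q = x ^ (q ^ 3)" by (simp add: power_mult[symmetric] power3_eq_cube mult.assoc)
    also have "\<dots> = x ^ card (UNIV :: 'a set)" using assms(2) by simp
    also have "\<dots> = x" by (rule power_card_same)
    finally show ?thesis .
  qed
  interpret fr: frob0 q "\<lambda>x::'a. x ^ q"
    by unfold_locales (use Fadd F3 q2 assms(2) in auto)
  show ?thesis
  proof (intro conjI)
    show "\<forall>\<theta>::'a. \<theta> \<noteq> 0 \<and> Norm q \<theta> \<noteq> 1 \<longrightarrow>
        (\<forall>P\<in>Pi_theta q \<theta>. typeIII_pt q P) \<and>
        (\<forall>l\<in>lines_of q (Pi_theta q \<theta>). typeIII_line q l) \<and>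
        mu_line_set q (Pi_theta q \<theta>) = S_theta q (- 1 / \<theta>) \<and>
        mu_pt_set q (Pi_theta q \<theta>) = pencil ptT (S_theta q (1 / \<theta>))"
      apply (intro allI impI)
      apply (erule conjE)
      apply (rule conjunct1[OF fr.part123], assumption+)
      done
    show "\<forall>\<theta>::'a. \<theta> \<noteq> 0 \<and> Norm q \<theta> \<noteq> 1 \<longrightarrow>
        (\<forall>P\<in>phi q ` Pi_theta q \<theta>. typeIII_pt q P) \<and>
        (\<forall>l\<in>lines_of q (phi q ` Pi_theta q \<theta>). typeIII_line q l) \<and>
        Tphi_sls q (mu_line_set q (phi q ` Pi_theta q \<theta>)) \<and>
        (\<exists>S. Tphi_sls q S \<and> mu_pt_set q (phi q ` Pi_theta q \<theta>) = pencil ptTphi S)"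
      apply (intro allI impI)
      apply (erule conjE)
      apply (rule conjunct1[OF conjunct2[OF fr.part123]], assumption+)
      done
    show "\<forall>\<theta>::'a. \<theta> \<noteq> 0 \<and> Norm q \<theta> \<noteq> 1 \<longrightarrow>
        (\<forall>P\<in>phi q ` phi q ` Pi_theta q \<theta>. typeIII_pt q P) \<and>
        (\<forall>l\<in>lines_of q (phi q ` phi q ` Pi_theta q \<theta>). typeIII_line q l) \<and>
        Tphi2_sls q (mu_line_set q (phi q ` phi q ` Pi_theta q \<theta>)) \<and>
        (\<exists>S. Tphi2_sls q S \<and> mu_pt_set q (phi q ` phi q ` Pi_theta q \<theta>) = pencil ptTphi2 S)"
      apply (intro allI impI)
      apply (erule conjE)
      apply (rule conjunct2[OF conjunct2[OF fr.part123]], assumption+)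
      done
    show "\<forall>B::'a tri set set. B \<in> orb_ST q \<and> is_Fq_plane q B \<and>
        (\<forall>l\<in>lines_of q B. typeIII_line q l) \<and>
        \<not> T_plane q B \<and> \<not> Tphi_plane q B \<and> \<not> Tphi2_plane q B \<longrightarrow>
        mu_line_set q B \<in> orb_ST q \<and> is_Fq_plane q (mu_line_set q B)"
      using fr.part4 by (intro allI impI) (elim conjE, blast)
    show "\<forall>B::'a tri set set. B \<in> orb_ST q \<and> is_Fq_plane q B \<and>
        (\<forall>P\<in>B. typeIII_pt q P) \<and>
        \<not> T_plane q B \<and> \<not> Tphi_plane q B \<and> \<not> Tphi2_plane q B \<longrightarrow>
        (\<exists>C. C \<in> orb_ST q \<and> is_Fq_plane q C \<and> mu_pt_set q B = lines_of q C)"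
      using fr.part5 by (intro allI impI) (elim conjE, blast)
  qed
qed

end
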